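(* Let $\mathcal{H}_A,\mathcal{H}_B$ be finite-dimensional Hilbert spaces with fixed reference bases $\{|i\rangle_A\}$ and $\{|j\rangle_B\}$, and equip $\mathcal{H}_A\otimes\mathcal{H}_B$ with the product reference basis. For every state $\rho_{AB}$ with reduced states $\rho_A,\rho_B$, $$C^{A|B}_a(\rho_{AB})\leq C_a(\rho_A)+E_a(\rho_{AB}),\qquad C_a(\rho_{AB})\leq C^{A|B}_a(\rho_{AB})+C_a(\rho_B),$$ $$C_a(\rho_{AB})\leq C_a(\rho_A)+C_a(\rho_B)+E_a(\rho_{AB}).$$
   Context: $S$ denotes von Neumann entropy. For a system with reference basis $\{|k\rangle\}$, $\Delta(\rho)=\sum_k|k\rangle\langle k|\rho|k\rangle\langle k|$. The coherence of assistance is $C_a(\rho)=\max\sum_ip_iS(\Delta(|\psi_i\rangle\langle\psi_i|))$, the maximum over all pure-state decompositions $\rho=\sum_ip_i|\psi_i\rangle\langle\psi_i|$ (for bipartite states $\Delta$ is with respect to the product basis). With $\Delta_A=\Delta\otimes\mathrm{id}_B$ dephasing only system $A$ in its basis, the IQ coherence of assistance is $C^{A|B}_a(\rho_{AB})=\max\sum_ip_iS(\Delta_A(|\psi_i\rangle\langle\psi_i|_{AB}))$ over all pure-state decompositions $\rho_{AB}=\sum_ip_i|\psi_i\rangle\langle\psi_i|_{AB}$. The entanglement of assistance is $E_a(\rho_{AB})=\max\sum_ip_iS(\mathrm{Tr}_A|\psi_i\rangle\langle\psi_i|_{AB})$ over all pure-state decompositions of $\rho_{AB}$. *)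

theory Defs
  imports "Jordan_Normal_Form.Char_Poly" "HOL-Computational_Algebra.Polynomial"
begin

text \<open>A Hilbert space of dimension n is complex n-vectors (JNF type complex vec), with the
standard basis as reference basis. The bipartite space H_A (x) H_B of dimensions dA, dB is
identified with dimension dA*dB, the product basis vector |i>|j> having index i*dB+j.\<close>

definition density_op :: "nat \<Rightarrow> complex mat \<Rightarrow> bool" where
  "density_op n \<rho> \<longleftrightarrow> \<rho> \<in> carrier_mat n n
     \<and> (\<forall>i<n. \<forall>j<n. \<rho> $$ (j, i) = cnj (\<rho> $$ (i, j)))
     \<and> (\<forall>v \<in> carrier_vec n. 0 \<le> (\<Sum>i<n. \<Sum>j<n. cnj (v $ i) * \<rho> $$ (i, j) * v $ j))
     \<and> (\<Sum>i<n. \<rho> $$ (i, i)) = 1"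

definition unit_vec_c :: "nat \<Rightarrow> complex vec \<Rightarrow> bool" where
  "unit_vec_c n \<psi> \<longleftrightarrow> \<psi> \<in> carrier_vec n \<and> (\<Sum>i<n. (cmod (\<psi> $ i))\<^sup>2) = 1"

definition proj :: "complex vec \<Rightarrow> complex mat" where
  "proj \<psi> = mat (dim_vec \<psi>) (dim_vec \<psi>) (\<lambda>(i, j). \<psi> $ i * cnj (\<psi> $ j))"

definition pure_decomp :: "nat \<Rightarrow> complex mat \<Rightarrow> (real \<times> complex vec) list \<Rightarrow> bool" where
  "pure_decomp n \<rho> L \<longleftrightarrow>
     (\<forall>(p, \<psi>) \<in> set L. 0 \<le> p \<and> unit_vec_c n \<psi>)
     \<and> (\<Sum>k<length L. fst (L ! k)) = 1
     \<and> \<rho> = mat n n (\<lambda>(i, j). \<Sum>k<length L. complex_of_real (fst (L ! k)) * proj (snd (L ! k)) $$ (i, j))"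

definition eta :: "real \<Rightarrow> real" where
  "eta x = (if x \<le> 0 then 0 else - x * log 2 x)"

definition vN_entropy :: "complex mat \<Rightarrow> real" where
  "vN_entropy \<rho> = (\<Sum>x \<in> {x. poly (char_poly \<rho>) x = 0}.
                      real (order x (char_poly \<rho>)) * eta (Re x))"

definition dephase :: "complex mat \<Rightarrow> complex mat" where
  "dephase \<rho> = mat (dim_row \<rho>) (dim_col \<rho>) (\<lambda>(i, j). if i = j then \<rho> $$ (i, j) else 0)"

text \<open>Delta_A = Delta (x) id_B: dephase only the A index (index k ~ (k div dB, k mod dB)).\<close>
definition dephase_A :: "nat \<Rightarrow> nat \<Rightarrow> complex mat \<Rightarrow> complex mat" where
  "dephase_A dA dB \<rho> = mat (dA * dB) (dA * dB)
     (\<lambda>(k, l). if k div dB = l div dB then \<rho> $$ (k, l) else 0)"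

definition ptrace_A :: "nat \<Rightarrow> nat \<Rightarrow> complex mat \<Rightarrow> complex mat" where
  "ptrace_A dA dB \<rho> = mat dB dB (\<lambda>(j, j'). \<Sum>i<dA. \<rho> $$ (i * dB + j, i * dB + j'))"

definition ptrace_B :: "nat \<Rightarrow> nat \<Rightarrow> complex mat \<Rightarrow> complex mat" where
  "ptrace_B dA dB \<rho> = mat dA dA (\<lambda>(i, i'). \<Sum>j<dB. \<rho> $$ (i * dB + j, i' * dB + j))"

definition coh_assist :: "nat \<Rightarrow> complex mat \<Rightarrow> real" where
  "coh_assist n \<rho> = (SUP L \<in> {L. pure_decomp n \<rho> L}.
      \<Sum>k<length L. fst (L ! k) * vN_entropy (dephase (proj (snd (L ! k)))))"

definition IQ_coh_assist :: "nat \<Rightarrow> nat \<Rightarrow> complex mat \<Rightarrow> real" where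
  "IQ_coh_assist dA dB \<rho> = (SUP L \<in> {L. pure_decomp (dA * dB) \<rho> L}.
      \<Sum>k<length L. fst (L ! k) * vN_entropy (dephase_A dA dB (proj (snd (L ! k)))))"

definition ent_assist :: "nat \<Rightarrow> nat \<Rightarrow> complex mat \<Rightarrow> real" where
  "ent_assist dA dB \<rho> = (SUP L \<in> {L. pure_decomp (dA * dB) \<rho> L}.
      \<Sum>k<length L. fst (L ! k) * vN_entropy (ptrace_A dA dB (proj (snd (L ! k)))))"

end

theory Submission
  imports Defs "Jordan_Normal_Form.Schur_Decomposition"
begin

definition adj :: "complex mat \<Rightarrow> complex mat" where
  "adj A = mat (dim_col A) (dim_row A) (\<lambda>(i,j). cnj (A $$ (j,i)))"

definition unitary :: "nat \<Rightarrow> complex mat \<Rightarrow> bool" where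
  "unitary n U \<longleftrightarrow> U \<in> carrier_mat n n \<and> adj U * U = 1\<^sub>m n"

lemma adj_carrier[simp]: "A \<in> carrier_mat m n \<Longrightarrow> adj A \<in> carrier_mat n m"
  by (auto simp: adj_def)
lemma adj_dims[simp]: "dim_row (adj A) = dim_col A" "dim_col (adj A) = dim_row A"
  by (auto simp: adj_def)
lemma adj_index[simp]: "i < dim_col A \<Longrightarrow> j < dim_row A \<Longrightarrow> adj A $$ (i,j) = cnj (A $$ (j,i))"
  by (auto simp: adj_def)
lemma adj_adj[simp]: "adj (adj A) = A"
  by (rule eq_matI, auto)

lemma adj_mult: assumes "A \<in> carrier_mat m n" "B \<in> carrier_mat n k"
  shows "adj (A * B) = adj B * adj A"
proof (rule eq_matI)
  fix i j assume ij: "i < dim_row (adj B * adj A)" "j < dim_col (adj B * adj A)"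
  show "adj (A * B) $$ (i, j) = (adj B * adj A) $$ (i, j)"
    using assms ij by (auto simp: scalar_prod_def adj_def intro!: sum.cong)
qed (use assms in auto)

lemma unitary_right: "unitary n U \<Longrightarrow> U * adj U = 1\<^sub>m n"
  unfolding unitary_def using mat_mult_left_right_inverse[of "adj U" n U] by auto

lemma unitary_adj: "unitary n U \<Longrightarrow> unitary n (adj U)"
  unfolding unitary_def using unitary_right[of n U] by (auto simp: unitary_def)

lemma unitary_mult: assumes "unitary n U" "unitary n V" shows "unitary n (U * V)"
proof -
  have c: "U \<in> carrier_mat n n" "V \<in> carrier_mat n n" "adj U \<in> carrier_mat n n" "adj V \<in> carrier_mat n n"
    using assms by (auto simp: unitary_def)
  have uu: "adj U * U = 1\<^sub>m n" "adj V * V = 1\<^sub>m n" using assms by (auto simp: unitary_def)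
  have "adj (U * V) * (U * V) = (adj V * adj U) * (U * V)" by (simp add: adj_mult[OF c(1,2)])
  also have "\<dots> = adj V * ((adj U * U) * V)" using c by (simp add: assoc_mult_mat[of _ n n _ n _ n])
  also have "\<dots> = 1\<^sub>m n" using uu c by simp
  finally show ?thesis using c unfolding unitary_def by auto
qed

lemma unit_completion:
  fixes v :: "complex vec"
  assumes v: "v \<in> carrier_vec n" and v0: "v \<noteq> 0\<^sub>v n"
  shows "\<exists>W c. unitary n W \<and> c \<noteq> 0 \<and> col W 0 = c \<cdot>\<^sub>v v"
proof -
  interpret cof_vec_space n "TYPE(complex)" .
  define b where "b = basis_completion v"
  define ws where "ws = gram_schmidt n b"
  from basis_completion[OF v v0, folded b_def]
  have dist_b: "distinct b" and indep: "\<not> lin_dep (set b)" and b: "set b \<subseteq> carrier_vec n"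
    and hdb: "hd b = v" and len_b: "length b = n" by auto
  have n0: "n \<noteq> 0" using v v0 by auto
  from hdb len_b n0 obtain vs where bv: "b = v # vs" by (cases b, auto)
  from gram_schmidt_result[OF b dist_b indep refl, folded ws_def]
  have ws: "set ws \<subseteq> carrier_vec n" "corthogonal ws" "length ws = n"
    by (auto simp: len_b)
  from gram_schmidt_hd[OF v, of vs, folded bv] have hdws: "hd ws = v" unfolding ws_def .
  have ws0: "ws ! 0 = v" using hdws ws(3) n0 by (cases ws, auto)
  define s where "s j = sqrt (Re (ws ! j \<bullet>c ws ! j))" for j
  have wsc: "j < n \<Longrightarrow> ws ! j \<in> carrier_vec n" for j using ws by auto
  have cpos: "j < n \<Longrightarrow> ws ! j \<bullet>c ws ! j \<noteq> 0" for j using ws(2,3) by (auto dest: corthogonalD)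
  have cge: "ws ! j \<bullet>c ws ! j \<ge> 0" for j by (rule conjugate_square_ge_0_vec)
  have creal: "j < n \<Longrightarrow> ws ! j \<bullet>c ws ! j = complex_of_real (s j) * complex_of_real (s j) \<and> s j > 0" for j
  proof -
    assume j: "j < n"
    have "Im (ws ! j \<bullet>c ws ! j) = 0" "Re (ws ! j \<bullet>c ws ! j) \<ge> 0"
      using cge[of j] by (auto simp: less_eq_complex_def)
    moreover have "Re (ws ! j \<bullet>c ws ! j) \<noteq> 0" using cpos[OF j] calculation(1) complex_eq_iff by force
    ultimately show ?thesis unfolding s_def
      by (auto simp: complex_eq_iff simp flip: of_real_mult)
  qed
  define W where "W = mat n n (\<lambda>(i,j). ws ! j $ i / complex_of_real (s j))"
  have Wc: "W \<in> carrier_mat n n" by (simp add: W_def)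
  have "adj W * W = 1\<^sub>m n"
  proof (rule eq_matI)
    fix i j assume ij: "i < dim_row (1\<^sub>m n :: complex mat)" "j < dim_col (1\<^sub>m n :: complex mat)"
    hence i: "i < n" and j: "j < n" by auto
    have "(adj W * W) $$ (i,j) = (\<Sum>k<n. cnj (ws ! i $ k) * ws ! j $ k) / (complex_of_real (s i) * complex_of_real (s j))"
      using i j Wc by (simp add: scalar_prod_def W_def sum_divide_distrib atLeast0LessThan mult_ac)
    also have "(\<Sum>k<n. cnj (ws ! i $ k) * ws ! j $ k) = ws ! j \<bullet>c ws ! i"
      using wsc[OF i] wsc[OF j] by (simp add: scalar_prod_def atLeast0LessThan mult_ac)
    finally have e: "(adj W * W) $$ (i,j) = ws ! j \<bullet>c ws ! i / (complex_of_real (s i) * complex_of_real (s j))" .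
    show "(adj W * W) $$ (i,j) = 1\<^sub>m n $$ (i,j)"
    proof (cases "i = j")
      case True thus ?thesis using e creal[OF i] i by simp
    next
      case False
      hence "ws ! j \<bullet>c ws ! i = 0" using ws(2,3) i j by (auto dest: corthogonalD)
      thus ?thesis using e False i j by simp
    qed
  qed (use Wc in auto)
  hence "unitary n W" using Wc by (simp add: unitary_def)
  moreover have "col W 0 = (1 / complex_of_real (s 0)) \<cdot>\<^sub>v v"
    using n0 v ws0 by (auto simp: W_def)
  moreover have "1 / complex_of_real (s 0) \<noteq> 0" using creal[of 0] n0 by auto
  ultimately show ?thesis by blast
qed

lemma adj_four_block_id:
  assumes "U \<in> carrier_mat m m"
  shows "adj (four_block_mat (1\<^sub>m 1) (0\<^sub>m 1 m) (0\<^sub>m m 1) U) = four_block_mat (1\<^sub>m 1) (0\<^sub>m 1 m) (0\<^sub>m m 1) (adj U)"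
  by (rule eq_matI, insert assms, auto)

lemma spectral:
  fixes A :: "complex mat"
  assumes "A \<in> carrier_mat n n" "adj A = A"
  shows "\<exists>U D. unitary n U \<and> D \<in> carrier_mat n n \<and> diagonal_mat D \<and> A = U * D * adj U"
  using assms
proof (induction n arbitrary: A)
  case 0
  have "A = 1\<^sub>m 0 * A * adj (1\<^sub>m 0)" by (rule eq_matI, insert 0, auto)
  moreover have "unitary 0 (1\<^sub>m 0)" by (auto simp: unitary_def intro!: eq_matI)
  moreover have "diagonal_mat A" using 0 by (auto simp: diagonal_mat_def)
  ultimately show ?case using 0 by blast
next
  case (Suc m A)
  let ?n = "Suc m"
  have A: "A \<in> carrier_mat ?n ?n" using Suc by auto
  obtain as where as: "char_poly A = (\<Prod>a\<leftarrow>as. [:- a, 1:])" "length as = ?n"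
    using char_poly_factorized[OF A] by blast
  then obtain e as' where eas: "as = e # as'" by (cases as, auto)
  have "poly (char_poly A) e = 0" unfolding as eas by simp
  hence ev: "eigenvalue A e" using eigenvalue_root_char_poly[OF A] by simp
  define v where "v = find_eigenvector A e"
  have "eigenvector A v e" using find_eigenvector[OF A ev] v_def by simp
  hence v: "v \<in> carrier_vec ?n" "v \<noteq> 0\<^sub>v ?n" "A *\<^sub>v v = e \<cdot>\<^sub>v v"
    using A by (auto simp: eigenvector_def)
  obtain W c where W: "unitary ?n W" "c \<noteq> 0" "col W 0 = c \<cdot>\<^sub>v v"
    using unit_completion[OF v(1,2)] by blast
  have Wc: "W \<in> carrier_mat ?n ?n" "adj W \<in> carrier_mat ?n ?n" using W by (auto simp: unitary_def)
  have WW: "adj W * W = 1\<^sub>m ?n" "W * adj W = 1\<^sub>m ?n" using W unitary_right[OF W(1)] by (auto simp: unitary_def)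
  define A' where "A' = adj W * A * W"
  have A'c: "A' \<in> carrier_mat ?n ?n" using Wc A unfolding A'_def by (meson mult_carrier_mat)
  have A'h: "adj A' = A'"
  proof -
    have c1: "adj W * A \<in> carrier_mat ?n ?n" using Wc A by (meson mult_carrier_mat)
    have "adj A' = adj W * adj (adj W * A)" unfolding A'_def by (rule adj_mult[OF c1 Wc(1)])
    also have "adj (adj W * A) = A * W" using adj_mult[OF Wc(2) A] Suc.prems(2) by simp
    finally show ?thesis unfolding A'_def using assoc_mult_mat[OF Wc(2) A Wc(1)] by simp
  qed
  have colW: "A *\<^sub>v col W 0 = e \<cdot>\<^sub>v col W 0"
    using W(3) v A by (simp add: mult_mat_vec smult_smult_assoc mult.commute)
  have A'col: "A' $$ (i, 0) = (if i = 0 then e else 0)" if i: "i < ?n" for i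
  proof -
    have "A' = adj W * (A * W)" unfolding A'_def using assoc_mult_mat[OF Wc(2) A Wc(1)] by simp
    hence "A' $$ (i, 0) = row (adj W) i \<bullet> col (A * W) 0" using i Wc A by simp
    also have "col (A * W) 0 = e \<cdot>\<^sub>v col W 0" using colW col_mult2[OF A Wc(1), of 0] by simp
    also have "row (adj W) i \<bullet> (e \<cdot>\<^sub>v col W 0) = e * (row (adj W) i \<bullet> col W 0)"
      using Wc i by (simp add: scalar_prod_smult_distrib[of _ ?n])
    also have "row (adj W) i \<bullet> col W 0 = (adj W * W) $$ (i, 0)" using Wc i by simp
    also have "\<dots> = (if i = 0 then 1 else 0)" using WW i by simp
    finally show ?thesis by simp
  qed
  have ereal: "e = cnj e"
  proof -
    have "A' $$ (0, 0) = adj A' $$ (0, 0)" using A'h by simp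
    also have "\<dots> = cnj (A' $$ (0, 0))" using A'c by simp
    finally show ?thesis using A'col[of 0] by simp
  qed
  have A'row: "A' $$ (0, j) = (if j = 0 then e else 0)" if j: "j < ?n" for j
  proof -
    have "A' $$ (0, j) = adj A' $$ (0, j)" using A'h by simp
    also have "\<dots> = cnj (A' $$ (j, 0))" using A'c j by simp
    finally have "A' $$ (0, j) = cnj (if j = 0 then e else 0)" using A'col[OF j] by simp
    thus ?thesis using ereal by (auto split: if_splits)
  qed
  define A3 where "A3 = mat m m (\<lambda>(i,j). A' $$ (Suc i, Suc j))"
  have A3c: "A3 \<in> carrier_mat m m" by (simp add: A3_def)
  have A3h: "adj A3 = A3"
  proof (rule eq_matI)
    fix i j assume "i < dim_row A3" "j < dim_col A3"
    hence ij: "i < m" "j < m" by (auto simp: A3_def)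
    have "A' $$ (Suc i, Suc j) = adj A' $$ (Suc i, Suc j)" using A'h by simp
    thus "adj A3 $$ (i, j) = A3 $$ (i, j)" using ij A'c by (simp add: A3_def)
  qed (auto simp: A3_def)
  obtain U3 D3 where U3: "unitary m U3" "D3 \<in> carrier_mat m m" "diagonal_mat D3" "A3 = U3 * D3 * adj U3"
    using Suc.IH[OF A3c A3h] by blast
  have U3c: "U3 \<in> carrier_mat m m" "adj U3 \<in> carrier_mat m m" using U3 by (auto simp: unitary_def)
  define E where "E = mat 1 1 (\<lambda>_. e)"
  define V where "V = four_block_mat (1\<^sub>m 1) (0\<^sub>m 1 m) (0\<^sub>m m 1) U3"
  define D where "D = four_block_mat E (0\<^sub>m 1 m) (0\<^sub>m m 1) D3"
  have Ec: "E \<in> carrier_mat 1 1" by (simp add: E_def)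
  have Vc: "V \<in> carrier_mat ?n ?n" using four_block_carrier_mat[OF one_carrier_mat[of 1] U3c(1), of "0\<^sub>m 1 m" "0\<^sub>m m 1"] by (simp add: V_def)
  have Dc: "D \<in> carrier_mat ?n ?n" using four_block_carrier_mat[OF Ec U3(2), of "0\<^sub>m 1 m" "0\<^sub>m m 1"] by (simp add: D_def)
  have adjV: "adj V = four_block_mat (1\<^sub>m 1) (0\<^sub>m 1 m) (0\<^sub>m m 1) (adj U3)"
    unfolding V_def by (rule adj_four_block_id[OF U3c(1)])
  have "adj V * V = four_block_mat (1\<^sub>m 1) (0\<^sub>m 1 m) (0\<^sub>m m 1) (adj U3 * U3)"
    unfolding adjV unfolding V_def by (subst mult_four_block_mat, insert U3c, auto)
  also have "\<dots> = 1\<^sub>m ?n" using U3(1) by (simp add: unitary_def)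
  finally have Vu: "unitary ?n V" using Vc by (simp add: unitary_def)
  have A'eq: "A' = four_block_mat E (0\<^sub>m 1 m) (0\<^sub>m m 1) A3"
  proof (rule eq_matI)
    fix i j assume "i < dim_row (four_block_mat E (0\<^sub>m 1 m) (0\<^sub>m m 1) A3)"
      "j < dim_col (four_block_mat E (0\<^sub>m 1 m) (0\<^sub>m m 1) A3)"
    hence ij: "i < ?n" "j < ?n" using A3c by (auto simp: E_def)
    show "A' $$ (i, j) = four_block_mat E (0\<^sub>m 1 m) (0\<^sub>m m 1) A3 $$ (i, j)"
    proof (cases "i = 0 \<or> j = 0")
      case True thus ?thesis using ij A'col A'row A3c by (auto simp: E_def)
    next
      case False
      then obtain i' j' where "i = Suc i'" "j = Suc j'" by (cases i; cases j; auto)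
      thus ?thesis using ij A3c by (auto simp: E_def A3_def)
    qed
  qed (use A'c A3c in \<open>auto simp: E_def\<close>)
  have "V * D * adj V = four_block_mat E (0\<^sub>m 1 m) (0\<^sub>m m 1) (U3 * D3 * adj U3)"
    unfolding adjV unfolding V_def D_def
    apply (subst mult_four_block_mat)
    using U3c U3(2) apply (auto simp: E_def)[8]
    apply (subst mult_four_block_mat)
    using U3c U3(2) by (auto simp: E_def)
  also have "\<dots> = A'" using A'eq U3(4) by simp
  finally have A'VD: "A' = V * D * adj V" by simp
  have "A = W * A' * adj W"
  proof -
    have AW: "A * W \<in> carrier_mat ?n ?n" using A Wc by (meson mult_carrier_mat)
    have "W * A' * adj W = W * (adj W * (A * W)) * adj W"
      unfolding A'_def using assoc_mult_mat[OF Wc(2) A Wc(1)] by simp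
    also have "\<dots> = ((W * adj W) * (A * W)) * adj W"
      using assoc_mult_mat[OF Wc(1) Wc(2) AW] by simp
    also have "\<dots> = A * (W * adj W)" using WW AW A Wc assoc_mult_mat[OF A Wc(1) Wc(2)] by simp
    finally show ?thesis using WW A by simp
  qed
  also have "\<dots> = (W * V) * D * adj (W * V)"
  proof -
    have VD: "V * D \<in> carrier_mat ?n ?n" using Vc Dc by (meson mult_carrier_mat)
    have VDV: "V * D * adj V \<in> carrier_mat ?n ?n" using VD Vc by (meson mult_carrier_mat adj_carrier)
    have WV: "W * V \<in> carrier_mat ?n ?n" using Vc Wc by (meson mult_carrier_mat)
    have "W * (V * D * adj V) * adj W = W * (V * D * (adj V * adj W))"
      using assoc_mult_mat[OF Wc(1) VDV Wc(2)] assoc_mult_mat[OF VD adj_carrier[OF Vc] Wc(2)] by simp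
    also have "\<dots> = (W * (V * D)) * (adj V * adj W)"
      using assoc_mult_mat[OF Wc(1) VD mult_carrier_mat[OF adj_carrier[OF Vc] Wc(2)]] by simp
    also have "W * (V * D) = W * V * D" using assoc_mult_mat[OF Wc(1) Vc Dc] by simp
    also have "adj V * adj W = adj (W * V)" using adj_mult[OF Wc(1) Vc] by simp
    finally show ?thesis unfolding A'VD .
  qed
  finally have "A = (W * V) * D * adj (W * V)" .
  moreover have "unitary ?n (W * V)" using unitary_mult[OF W(1) Vu] .
  moreover have "diagonal_mat D" using U3(3) U3(2) unfolding D_def diagonal_mat_def
    by (auto simp: E_def)
  ultimately show ?case using Dc by blast
qed

lemma sum_list_count_real:
  "sum_list (map (f :: 'a \<Rightarrow> real) xs) = (\<Sum>x\<in>set xs. real (count_list xs x) * f x)"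
proof (induction xs)
  case (Cons x xs)
  have "(\<Sum>y\<in>set (x#xs). real (count_list (x#xs) y) * f y)
      = (\<Sum>y\<in>insert x (set xs). real (count_list xs y) * f y + (if x = y then f y else 0))"
    by (rule sum.cong, auto simp: distrib_right)
  also have "\<dots> = (\<Sum>y\<in>insert x (set xs). real (count_list xs y) * f y) + f x"
    by (simp add: sum.distrib)
  also have "(\<Sum>y\<in>insert x (set xs). real (count_list xs y) * f y) = (\<Sum>y\<in>set xs. real (count_list xs y) * f y)"
  proof (cases "x \<in> set xs")
    case True thus ?thesis by (simp add: insert_absorb)
  next
    case False
    hence "count_list xs x = 0" by (simp add: count_list_0_iff)
    thus ?thesis using False by simp
  qed
  finally show ?case using Cons by simp
qed simp

lemma order_prod_linear:
  fixes x :: complex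
  shows "Polynomial.order x (\<Prod>a\<leftarrow>as. [:- a, 1:]) = count_list as x"
proof (induction as)
  case Nil thus ?case by simp
next
  case (Cons a as)
  have nz: "(\<Prod>a\<leftarrow>as. [:- a, 1:]) \<noteq> (0 :: complex poly)"
    by (auto simp: prod_list_zero_iff)
  have "Polynomial.order x ([:- a, 1:] * (\<Prod>a\<leftarrow>as. [:- a, 1:])) = Polynomial.order x [:- a, 1:] + Polynomial.order x (\<Prod>a\<leftarrow>as. [:- a, 1:])"
    by (rule order_mult, metis nz mult_eq_0_iff pCons_eq_0_iff one_neq_zero)
  moreover have "Polynomial.order x [:- a, 1:] = (if x = a then 1 else 0)"
  proof (cases "x = a")
    case True thus ?thesis using order_power_n_n[of a 1] by simp
  next
    case False thus ?thesis using order_0I[of "[:- a, 1:]" x] by simp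
  qed
  ultimately show ?case using Cons by auto
qed

lemma vN_entropy_factorized:
  assumes "char_poly M = (\<Prod>a\<leftarrow>as. [:- a, 1:])"
  shows "vN_entropy M = sum_list (map (\<lambda>a. eta (Re a)) as)"
proof -
  have roots: "{x. poly (char_poly M) x = 0} = set as"
    unfolding assms by (auto simp: poly_prod_list prod_list_zero_iff)
  show ?thesis unfolding vN_entropy_def roots sum_list_count_real
    by (rule sum.cong, auto simp: assms order_prod_linear)
qed

lemma vN_entropy_diag_unitary:
  assumes U: "unitary n U" and D: "D \<in> carrier_mat n n" "diagonal_mat D"
    and A: "A = U * D * adj U"
  shows "vN_entropy A = (\<Sum>i<n. eta (Re (D $$ (i,i))))"
proof -
  have Uc: "U \<in> carrier_mat n n" "adj U \<in> carrier_mat n n" using U by (auto simp: unitary_def)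
  have "similar_mat A D"
    by (rule similar_matI[of _ _ U "adj U" n], insert Uc D A unitary_right[OF U] U, auto simp: unitary_def mult_carrier_mat)
  hence "char_poly A = char_poly D" by (rule char_poly_similar)
  also have "\<dots> = (\<Prod>a\<leftarrow>diag_mat D. [:- a, 1:])"
    by (rule char_poly_upper_triangular[OF D(1)], insert D, auto simp: upper_triangular_def diagonal_mat_def)
  finally have "vN_entropy A = sum_list (map (\<lambda>a. eta (Re a)) (diag_mat D))"
    by (rule vN_entropy_factorized)
  also have "\<dots> = (\<Sum>i<n. eta (Re (D $$ (i,i))))"
    using D by (simp add: diag_mat_def sum_list_sum_nth atLeast0LessThan)
  finally show ?thesis .
qed

lemma vN_entropy_diag:
  assumes D: "D \<in> carrier_mat n n" "diagonal_mat D"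
  shows "vN_entropy D = (\<Sum>i<n. eta (Re (D $$ (i,i))))"
proof -
  have "unitary n (1\<^sub>m n)" by (auto simp: unitary_def intro!: eq_matI)
  moreover have "D = 1\<^sub>m n * D * adj (1\<^sub>m n)"
  proof -
    have "adj (1\<^sub>m n) = (1\<^sub>m n :: complex mat)" by (rule eq_matI, auto)
    thus ?thesis using D by simp
  qed
  ultimately show ?thesis using vN_entropy_diag_unitary D by blast
qed

lemma det_sylvester:
  fixes X Y :: "complex mat" and k :: complex
  assumes X: "X \<in> carrier_mat n m" and Y: "Y \<in> carrier_mat m n"
  shows "k ^ m * det (k \<cdot>\<^sub>m 1\<^sub>m n - X * Y) = k ^ n * det (k \<cdot>\<^sub>m 1\<^sub>m m - Y * X)"
proof -
  have XY: "X * Y \<in> carrier_mat n n" and YX: "Y * X \<in> carrier_mat m m" using X Y by auto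
  define M where "M = four_block_mat (k \<cdot>\<^sub>m 1\<^sub>m n) X Y (1\<^sub>m m)"
  define L1 where "L1 = four_block_mat (1\<^sub>m n) (- X) (0\<^sub>m m n) (1\<^sub>m m)"
  define L2 where "L2 = four_block_mat (1\<^sub>m n) (0\<^sub>m n m) (- Y) (k \<cdot>\<^sub>m 1\<^sub>m m)"
  have Mc: "M \<in> carrier_mat (n+m) (n+m)" unfolding M_def using X Y by auto
  have L1c: "L1 \<in> carrier_mat (n+m) (n+m)" unfolding L1_def using X Y by auto
  have L2c: "L2 \<in> carrier_mat (n+m) (n+m)" unfolding L2_def using X Y by auto
  have "L1 * M = four_block_mat (k \<cdot>\<^sub>m 1\<^sub>m n - X * Y) (0\<^sub>m n m) Y (1\<^sub>m m)"
  proof -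
    have "L1 * M = four_block_mat (1\<^sub>m n * (k \<cdot>\<^sub>m 1\<^sub>m n) + (- X) * Y) (1\<^sub>m n * X + (- X) * 1\<^sub>m m)
       (0\<^sub>m m n * (k \<cdot>\<^sub>m 1\<^sub>m n) + 1\<^sub>m m * Y) (0\<^sub>m m n * X + 1\<^sub>m m * 1\<^sub>m m)"
      unfolding L1_def M_def by (rule mult_four_block_mat, insert X Y, auto)
    also have "1\<^sub>m n * (k \<cdot>\<^sub>m 1\<^sub>m n) + (- X) * Y = k \<cdot>\<^sub>m 1\<^sub>m n - X * Y"
      by (rule eq_matI, insert X Y, auto)
    also have "1\<^sub>m n * X + (- X) * 1\<^sub>m m = 0\<^sub>m n m"
      by (rule eq_matI, insert X Y, auto)
    also have "0\<^sub>m m n * (k \<cdot>\<^sub>m 1\<^sub>m n) + 1\<^sub>m m * Y = Y"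
      by (rule eq_matI, insert X Y, auto)
    also have "0\<^sub>m m n * X + 1\<^sub>m m * 1\<^sub>m m = 1\<^sub>m m"
      by (rule eq_matI, insert X Y, auto)
    finally show ?thesis .
  qed
  hence "det (L1 * M) = det (k \<cdot>\<^sub>m 1\<^sub>m n - X * Y) * det (1\<^sub>m m :: complex mat)"
  proof -
    have c: "k \<cdot>\<^sub>m 1\<^sub>m n - X * Y \<in> carrier_mat n n" using XY by (intro minus_carrier_mat; auto)
    show ?thesis using \<open>L1 * M = _\<close> det_four_block_mat_upper_right_zero[OF c refl Y one_carrier_mat] by simp
  qed
  moreover have "det L1 = 1" unfolding L1_def
    by (subst det_four_block_mat_lower_left_zero[of _ n _ m], insert X, auto)
  ultimately have dM: "det M = det (k \<cdot>\<^sub>m 1\<^sub>m n - X * Y)"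
    using det_mult[OF L1c Mc] by simp
  have "L2 * M = four_block_mat (k \<cdot>\<^sub>m 1\<^sub>m n) X (0\<^sub>m m n) (k \<cdot>\<^sub>m 1\<^sub>m m - Y * X)"
  proof -
    have "L2 * M = four_block_mat (1\<^sub>m n * (k \<cdot>\<^sub>m 1\<^sub>m n) + 0\<^sub>m n m * Y) (1\<^sub>m n * X + 0\<^sub>m n m * 1\<^sub>m m)
       ((- Y) * (k \<cdot>\<^sub>m 1\<^sub>m n) + (k \<cdot>\<^sub>m 1\<^sub>m m) * Y) ((- Y) * X + (k \<cdot>\<^sub>m 1\<^sub>m m) * 1\<^sub>m m)"
      unfolding L2_def M_def by (rule mult_four_block_mat, insert X Y, auto)
    also have "1\<^sub>m n * (k \<cdot>\<^sub>m 1\<^sub>m n) + 0\<^sub>m n m * Y = k \<cdot>\<^sub>m 1\<^sub>m n"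
      by (rule eq_matI, insert X Y, auto)
    also have "1\<^sub>m n * X + 0\<^sub>m n m * 1\<^sub>m m = X"
      by (rule eq_matI, insert X Y, auto)
    also have "(- Y) * (k \<cdot>\<^sub>m 1\<^sub>m n) + (k \<cdot>\<^sub>m 1\<^sub>m m) * Y = 0\<^sub>m m n"
      by (rule eq_matI, insert X Y, auto)
    also have "(- Y) * X + (k \<cdot>\<^sub>m 1\<^sub>m m) * 1\<^sub>m m = k \<cdot>\<^sub>m 1\<^sub>m m - Y * X"
      by (rule eq_matI, insert X Y, auto)
    finally show ?thesis .
  qed
  hence "det (L2 * M) = k ^ n * det (k \<cdot>\<^sub>m 1\<^sub>m m - Y * X)"
  proof -
    have c: "k \<cdot>\<^sub>m 1\<^sub>m m - Y * X \<in> carrier_mat m m" using YX by (intro minus_carrier_mat; auto)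
    have c2: "k \<cdot>\<^sub>m 1\<^sub>m n \<in> carrier_mat n n" by auto
    show ?thesis using \<open>L2 * M = _\<close> det_four_block_mat_lower_left_zero[OF c2 X refl c] by simp
  qed
  moreover have "det L2 = k ^ m" unfolding L2_def
    by (subst det_four_block_mat_upper_right_zero[of _ n _ m], insert Y, auto)
  ultimately show ?thesis using det_mult[OF L2c Mc] dM by simp
qed

lemma char_poly_nz: assumes "A \<in> carrier_mat n n" shows "char_poly (A :: complex mat) \<noteq> 0"
  using degree_monic_char_poly[OF assms] by auto

lemma char_poly_sylvester:
  fixes X Y :: "complex mat"
  assumes X: "X \<in> carrier_mat n m" and Y: "Y \<in> carrier_mat m n"
  shows "[:0,1:] ^ m * char_poly (X * Y) = [:0,1:] ^ n * char_poly (Y * X)"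
proof -
  have XY: "X * Y \<in> carrier_mat n n" and YX: "Y * X \<in> carrier_mat m m" using X Y by auto
  have "poly ([:0,1:] ^ m * char_poly (X * Y)) k = poly ([:0,1:] ^ n * char_poly (Y * X)) k" for k
  proof -
    have e1: "- char_matrix (X * Y) k = k \<cdot>\<^sub>m 1\<^sub>m n - X * Y"
      by (rule eq_matI, insert X Y, auto simp: char_matrix_def)
    have e2: "- char_matrix (Y * X) k = k \<cdot>\<^sub>m 1\<^sub>m m - Y * X"
      by (rule eq_matI, insert X Y, auto simp: char_matrix_def)
    show ?thesis using det_sylvester[OF X Y, of k]
      by (simp add: char_poly_matrix[OF XY] char_poly_matrix[OF YX] e1 e2 poly_power)
  qed
  thus ?thesis using poly_eq_poly_eq_iff by blast
qed

lemma vN_entropy_nonzero_roots: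
  assumes "A \<in> carrier_mat n n"
  shows "vN_entropy A = (\<Sum>x\<in>{x. poly (char_poly A) x = 0 \<and> x \<noteq> 0}. real (Polynomial.order x (char_poly A)) * eta (Re x))"
  unfolding vN_entropy_def
  by (rule sum.mono_neutral_right, insert poly_roots_finite[OF char_poly_nz[OF assms]], auto simp: eta_def)

lemma vN_entropy_sylvester:
  fixes X Y :: "complex mat"
  assumes X: "X \<in> carrier_mat n m" and Y: "Y \<in> carrier_mat m n"
  shows "vN_entropy (X * Y) = vN_entropy (Y * X)"
proof -
  have XY: "X * Y \<in> carrier_mat n n" and YX: "Y * X \<in> carrier_mat m m" using X Y by auto
  let ?p = "char_poly (X * Y)" and ?q = "char_poly (Y * X)"
  have pq: "[:0,1:] ^ m * ?p = [:0,1:] ^ n * ?q" by (rule char_poly_sylvester[OF X Y])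
  have pz: "?p \<noteq> 0" "?q \<noteq> 0" using char_poly_nz XY YX by auto
  have tz: "x \<noteq> 0 \<Longrightarrow> poly ([:0,1:] ^ k) x \<noteq> (0::complex)" for x k by (simp add: poly_power)
  have ordt: "x \<noteq> 0 \<Longrightarrow> Polynomial.order x ([:0,1:] ^ k) = (0::nat)" for x :: complex and k
    using order_0I[OF tz] by blast
  have ord: "Polynomial.order x ?p = Polynomial.order x ?q" if x: "x \<noteq> 0" for x
  proof -
    have "Polynomial.order x ([:0,1:] ^ m * ?p) = Polynomial.order x ([:0,1:] ^ n * ?q)" using pq by simp
    moreover have "Polynomial.order x ([:0,1:] ^ m * ?p) = Polynomial.order x ([:0,1:] ^ m) + Polynomial.order x ?p"
      by (rule order_mult, use pz in simp)
    moreover have "Polynomial.order x ([:0,1:] ^ n * ?q) = Polynomial.order x ([:0,1:] ^ n) + Polynomial.order x ?q"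
      by (rule order_mult, use pz in simp)
    ultimately show ?thesis using ordt[OF x] by simp
  qed
  have roots: "{x. poly ?p x = 0 \<and> x \<noteq> 0} = {x. poly ?q x = 0 \<and> x \<noteq> 0}"
  proof -
    have "poly ?p x = 0 \<longleftrightarrow> poly ?q x = 0" if "x \<noteq> 0" for x
      using arg_cong[OF pq, of "\<lambda>r. poly r x"] tz[OF that, of m] tz[OF that, of n] by auto
    thus ?thesis by auto
  qed
  show ?thesis unfolding vN_entropy_nonzero_roots[OF XY] vN_entropy_nonzero_roots[OF YX] roots
    by (rule sum.cong, auto simp: ord)
qed

lemma vN_entropy_transpose:
  assumes "A \<in> carrier_mat n n" shows "vN_entropy (transpose_mat A) = vN_entropy A"
  unfolding vN_entropy_def using char_poly_transpose_mat[OF assms] by simp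

lemma sum_prod_index:
  fixes f :: "nat \<Rightarrow> 'a :: comm_monoid_add"
  shows "(\<Sum>k<a*b. f k) = (\<Sum>i<a. \<Sum>j<b. f (i*b+j))"
proof -
  have "(\<Sum>k<a*b. f k) = (\<Sum>i<a. sum f {i*b..<i*b+b})" by (rule sum.nat_group[of f b a, symmetric])
  also have "\<dots> = (\<Sum>i<a. \<Sum>j<b. f (i*b+j))"
  proof (rule sum.cong[OF refl])
    fix i
    have "sum f {0 + i*b..<b + i*b} = (\<Sum>j\<in>{0..<b}. f (j + i*b))" by (rule sum.shift_bounds_nat_ivl)
    thus "sum f {i*b..<i*b+b} = (\<Sum>j<b. f (i*b+j))" by (simp add: atLeast0LessThan add.commute)
  qed
  finally show ?thesis .
qed

lemma eta_zero[simp]: "eta 0 = 0" by (simp add: eta_def)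

lemma eta_mult: assumes "x \<ge> 0" "y \<ge> 0" shows "eta (x * y) = x * eta y + y * eta x"
proof (cases "x = 0 \<or> y = 0")
  case True thus ?thesis by (auto simp: eta_def)
next
  case False
  hence "x > 0" "y > 0" using assms by auto
  hence "x * y > 0" by simp
  hence e1: "eta (x * y) = - (x * y) * log 2 (x * y)" by (simp add: eta_def)
  have e2: "eta x = - x * log 2 x" "eta y = - y * log 2 y" using \<open>x > 0\<close> \<open>y > 0\<close> by (auto simp: eta_def)
  show ?thesis unfolding e1 e2 using \<open>x > 0\<close> \<open>y > 0\<close> by (simp add: log_mult algebra_simps)
qed

lemma eta_add: assumes "x \<ge> 0" "y \<ge> 0" shows "eta (x + y) \<le> eta x + eta y"
proof (cases "x = 0 \<or> y = 0")
  case True thus ?thesis using assms by (auto simp: eta_def)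
next
  case False
  hence x: "x > 0" and y: "y > 0" using assms by auto
  have "log 2 x \<le> log 2 (x + y)" "log 2 y \<le> log 2 (x + y)" using x y by auto
  hence h1: "x * log 2 x \<le> x * log 2 (x + y)" and h2: "y * log 2 y \<le> y * log 2 (x + y)"
    using x y by (auto intro: mult_left_mono)
  have "x + y > 0" using x y by simp
  thus ?thesis using x y add_mono[OF h1 h2] by (simp add: eta_def algebra_simps)
qed

lemma eta_sum: assumes "finite I" "\<forall>i\<in>I. f i \<ge> 0" shows "eta (sum f I) \<le> (\<Sum>i\<in>I. eta (f i))"
  using assms
proof (induction I rule: finite_induct)
  case (insert a F)
  have "eta (sum f (insert a F)) = eta (f a + sum f F)" using insert by simp
  also have "\<dots> \<le> eta (f a) + eta (sum f F)" by (rule eta_add, use insert in \<open>auto intro: sum_nonneg\<close>)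
  also have "\<dots> \<le> eta (f a) + (\<Sum>i\<in>F. eta (f i))" using insert by auto
  finally show ?case using insert by simp
qed simp

lemma eta_le: "eta x \<le> 1 / ln 2"
proof (cases "x \<le> 0")
  case True thus ?thesis by (simp add: eta_def)
next
  case False
  hence x: "x > 0" by simp
  have "ln (1 / x) \<le> 1 / x - 1" by (rule ln_le_minus_one, use x in simp)
  hence "- ln x \<le> 1 / x - 1" using x by (simp add: ln_div)
  hence "x * (- ln x) \<le> x * (1 / x - 1)" using x by (intro mult_left_mono) auto
  hence "- x * ln x \<le> 1" using x by (simp add: algebra_simps)
  hence "- x * ln x / ln 2 \<le> 1 / ln 2" by (intro divide_right_mono) auto
  thus ?thesis using x by (simp add: eta_def log_def)
qed

lemma shannon_ineq:
  assumes I: "finite I" and J: "finite J"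
    and q: "\<forall>m\<in>I. q m \<ge> 0" and a: "\<forall>m\<in>I. \<forall>i\<in>J. a m i \<ge> 0"
    and a1: "\<forall>m\<in>I. (\<Sum>i\<in>J. a m i) = 1"
  shows "(\<Sum>i\<in>J. eta (\<Sum>m\<in>I. q m * a m i)) \<le> (\<Sum>m\<in>I. q m * (\<Sum>i\<in>J. eta (a m i))) + (\<Sum>m\<in>I. eta (q m))"
proof -
  have "(\<Sum>i\<in>J. eta (\<Sum>m\<in>I. q m * a m i)) \<le> (\<Sum>i\<in>J. \<Sum>m\<in>I. eta (q m * a m i))"
    by (rule sum_mono, rule eta_sum[OF I], use q a in auto)
  also have "\<dots> = (\<Sum>i\<in>J. \<Sum>m\<in>I. q m * eta (a m i) + a m i * eta (q m))"
    by (rule sum.cong[OF refl], rule sum.cong[OF refl], rule eta_mult, use q a in auto)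
  also have "\<dots> = (\<Sum>m\<in>I. q m * (\<Sum>i\<in>J. eta (a m i))) + (\<Sum>m\<in>I. (\<Sum>i\<in>J. a m i) * eta (q m))"
    by (simp add: sum.distrib sum_distrib_left sum_distrib_right sum.swap[of _ J I])
  also have "(\<Sum>m\<in>I. (\<Sum>i\<in>J. a m i) * eta (q m)) = (\<Sum>m\<in>I. eta (q m))"
    using a1 by simp
  finally show ?thesis .
qed

lemma cond_entropy_eq:
  assumes J: "finite J" and b: "\<forall>j\<in>J. b j \<ge> 0" and p: "p = (\<Sum>j\<in>J. b j)"
    and a: "p > 0 \<Longrightarrow> \<forall>j\<in>J. a j = b j / p"
  shows "(\<Sum>j\<in>J. eta (b j)) = eta p + p * (\<Sum>j\<in>J. eta (a j))"
proof (cases "p > 0")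
  case False
  hence "p = 0" using p b by (metis sum_nonneg linorder_not_less order_antisym)
  hence "\<forall>j\<in>J. b j = 0" using p b J by (metis sum_nonneg_eq_0_iff)
  thus ?thesis using \<open>p = 0\<close> by simp
next
  case True
  have "(\<Sum>j\<in>J. eta (b j)) = (\<Sum>j\<in>J. eta (p * a j))"
    using a[OF True] True by (intro sum.cong, auto)
  also have "\<dots> = (\<Sum>j\<in>J. p * eta (a j) + a j * eta p)"
    by (rule sum.cong[OF refl], rule eta_mult, use True a b in auto)
  also have "\<dots> = p * (\<Sum>j\<in>J. eta (a j)) + (\<Sum>j\<in>J. a j) * eta p"
    by (simp add: sum.distrib sum_distrib_left sum_distrib_right)
  also have "(\<Sum>j\<in>J. a j) = 1"
  proof -
    have "(\<Sum>j\<in>J. a j) = (\<Sum>j\<in>J. b j / p)" using a[OF True] by simp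
    also have "\<dots> = 1" using p True by (simp add: sum_divide_distrib[symmetric])
    finally show ?thesis .
  qed
  finally show ?thesis by simp
qed

lemma idx_bound: assumes "i < (a::nat)" "j < b" shows "i * b + j < a * b"
proof -
  have "(i + 1) * b \<le> a * b" using assms by (intro mult_right_mono) auto
  thus ?thesis using assms by (simp add: algebra_simps)
qed

lemma idx_div[simp]: "j < (b::nat) \<Longrightarrow> (i * b + j) div b = i"
  by simp
lemma idx_mod[simp]: "j < (b::nat) \<Longrightarrow> (i * b + j) mod b = j"
  by simp

lemma proj_carrier[simp]: "\<psi> \<in> carrier_vec n \<Longrightarrow> proj \<psi> \<in> carrier_mat n n"
  by (auto simp: proj_def)
lemma proj_index[simp]: "\<psi> \<in> carrier_vec n \<Longrightarrow> i < n \<Longrightarrow> j < n \<Longrightarrow> proj \<psi> $$ (i,j) = \<psi> $ i * cnj (\<psi> $ j)"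
  by (auto simp: proj_def)

lemma cnj_mult_self: "Re (z * cnj z) = (cmod z)\<^sup>2" "Im (z * cnj z) = 0"
  using complex_norm_square[of z] by (metis Re_complex_of_real, metis Im_complex_of_real)

lemma cnj_mult_self': "cnj z * z = complex_of_real ((cmod z)\<^sup>2)"
  by (metis complex_norm_square mult.commute)

lemma entropy_dephase:
  assumes "\<psi> \<in> carrier_vec n"
  shows "vN_entropy (dephase (proj \<psi>)) = (\<Sum>k<n. eta ((cmod (\<psi> $ k))\<^sup>2))"
proof -
  have c: "dephase (proj \<psi>) \<in> carrier_mat n n" using assms by (simp add: dephase_def proj_def)
  have d: "diagonal_mat (dephase (proj \<psi>))" by (simp add: dephase_def diagonal_mat_def)
  show ?thesis unfolding vN_entropy_diag[OF c d]
  proof (rule sum.cong[OF refl])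
    fix k assume "k \<in> {..<n}"
    hence "dephase (proj \<psi>) $$ (k,k) = complex_of_real ((cmod (\<psi> $ k))\<^sup>2)"
      using assms complex_norm_square[of "\<psi> $ k"] by (simp add: dephase_def proj_def)
    thus "eta (Re (dephase (proj \<psi>) $$ (k, k))) = eta ((cmod (\<psi> $ k))\<^sup>2)" by simp
  qed
qed

definition pA :: "nat \<Rightarrow> complex vec \<Rightarrow> nat \<Rightarrow> real" where
  "pA dB \<psi> i = (\<Sum>j<dB. (cmod (\<psi> $ (i * dB + j)))\<^sup>2)"

lemma entropy_dephase_A:
  assumes psi: "\<psi> \<in> carrier_vec (dA * dB)"
  shows "vN_entropy (dephase_A dA dB (proj \<psi>)) = (\<Sum>i<dA. eta (pA dB \<psi> i))"
proof -
  let ?n = "dA * dB"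
  define X where "X = mat ?n dA (\<lambda>(k,i). if k div dB = i then \<psi> $ k else 0)"
  have Xc: "X \<in> carrier_mat ?n dA" by (simp add: X_def)
  have kdiv: "k < ?n \<Longrightarrow> k div dB < dA" for k by (simp add: less_mult_imp_div_less)
  have e1: "X * adj X = dephase_A dA dB (proj \<psi>)"
  proof (rule eq_matI)
    fix k l assume "k < dim_row (dephase_A dA dB (proj \<psi>))" "l < dim_col (dephase_A dA dB (proj \<psi>))"
    hence kl: "k < ?n" "l < ?n" by (auto simp: dephase_A_def)
    have "(X * adj X) $$ (k,l) = (\<Sum>i<dA. (if k div dB = i then \<psi> $ k else 0) * cnj (if l div dB = i then \<psi> $ l else 0))"
      using kl Xc by (simp add: scalar_prod_def X_def atLeast0LessThan)
    also have "\<dots> = (if k div dB = l div dB then \<psi> $ k * cnj (\<psi> $ l) else 0)"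
    proof (cases "k div dB = l div dB")
      case True
      have "(\<Sum>i<dA. (if k div dB = i then \<psi> $ k else 0) * cnj (if l div dB = i then \<psi> $ l else 0))
          = (\<Sum>i<dA. if k div dB = i then \<psi> $ k * cnj (\<psi> $ l) else 0)"
        by (rule sum.cong, auto simp: True)
      also have "\<dots> = \<psi> $ k * cnj (\<psi> $ l)" using kdiv[OF kl(1)] by (simp add: sum.delta)
      finally show ?thesis using True by simp
    next
      case False
      have "(\<Sum>i<dA. (if k div dB = i then \<psi> $ k else 0) * cnj (if l div dB = i then \<psi> $ l else 0)) = 0"
        by (rule sum.neutral, auto simp: False)
      thus ?thesis using False by simp
    qed
    finally show "(X * adj X) $$ (k,l) = dephase_A dA dB (proj \<psi>) $$ (k,l)"
      using kl psi by (simp add: dephase_A_def)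
  qed (auto simp: X_def dephase_A_def)
  define P where "P = adj X * X"
  have Pc: "P \<in> carrier_mat dA dA" using mult_carrier_mat[OF adj_carrier[OF Xc] Xc] by (simp add: P_def)
  have Pent: "P $$ (i,i') = (if i = i' then complex_of_real (pA dB \<psi> i) else 0)" if ii: "i < dA" "i' < dA" for i i'
  proof -
    have "P $$ (i,i') = (\<Sum>k<?n. cnj (if k div dB = i then \<psi> $ k else 0) * (if k div dB = i' then \<psi> $ k else 0))"
      using ii Xc by (simp add: P_def scalar_prod_def X_def atLeast0LessThan)
    also have "\<dots> = (\<Sum>i2<dA. \<Sum>j<dB. cnj (if i2 = i then \<psi> $ (i2*dB+j) else 0) * (if i2 = i' then \<psi> $ (i2*dB+j) else 0))"
      by (subst sum_prod_index, rule sum.cong[OF refl], rule sum.cong[OF refl], auto)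
    also have "\<dots> = (if i = i' then complex_of_real (pA dB \<psi> i) else 0)"
    proof (cases "i = i'")
      case True
      have "(\<Sum>i2<dA. \<Sum>j<dB. cnj (if i2 = i then \<psi> $ (i2*dB+j) else 0) * (if i2 = i' then \<psi> $ (i2*dB+j) else 0))
          = (\<Sum>i2<dA. if i2 = i then (\<Sum>j<dB. cnj (\<psi> $ (i*dB+j)) * \<psi> $ (i*dB+j)) else 0)"
        by (rule sum.cong, auto simp: True)
      also have "\<dots> = (\<Sum>j<dB. cnj (\<psi> $ (i*dB+j)) * \<psi> $ (i*dB+j))" using ii by (simp add: sum.delta')
      also have "\<dots> = complex_of_real (pA dB \<psi> i)" by (simp add: pA_def cnj_mult_self')
      finally show ?thesis using True by simp
    next
      case False
      thus ?thesis by (auto intro!: sum.neutral)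
    qed
    finally show ?thesis .
  qed
  have Pd: "diagonal_mat P" using Pent Pc by (auto simp: diagonal_mat_def)
  have "vN_entropy (dephase_A dA dB (proj \<psi>)) = vN_entropy P"
    unfolding e1[symmetric] P_def by (rule vN_entropy_sylvester[OF Xc adj_carrier[OF Xc]])
  also have "\<dots> = (\<Sum>i<dA. eta (pA dB \<psi> i))"
    unfolding vN_entropy_diag[OF Pc Pd] by (rule sum.cong, auto simp: Pent)
  finally show ?thesis .
qed

definition Psi :: "nat \<Rightarrow> nat \<Rightarrow> complex vec \<Rightarrow> complex mat" where
  "Psi dA dB \<psi> = mat dA dB (\<lambda>(i,j). \<psi> $ (i * dB + j))"

lemma Psi_carrier[simp]: "Psi dA dB \<psi> \<in> carrier_mat dA dB" by (simp add: Psi_def)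

lemma ptrace_B_Psi:
  assumes psi: "\<psi> \<in> carrier_vec (dA * dB)"
  shows "ptrace_B dA dB (proj \<psi>) = Psi dA dB \<psi> * adj (Psi dA dB \<psi>)"
  by (rule eq_matI, insert psi, auto simp: ptrace_B_def Psi_def scalar_prod_def atLeast0LessThan idx_bound intro!: sum.cong)

lemma ptrace_A_Psi:
  assumes psi: "\<psi> \<in> carrier_vec (dA * dB)"
  shows "ptrace_A dA dB (proj \<psi>) = transpose_mat (adj (Psi dA dB \<psi>) * Psi dA dB \<psi>)"
  by (rule eq_matI, insert psi, auto simp: ptrace_A_def Psi_def scalar_prod_def atLeast0LessThan idx_bound mult.commute intro!: sum.cong)

lemma entropy_ptrace_AB:
  assumes psi: "\<psi> \<in> carrier_vec (dA * dB)"
  shows "vN_entropy (ptrace_A dA dB (proj \<psi>)) = vN_entropy (ptrace_B dA dB (proj \<psi>))"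
proof -
  have c: "adj (Psi dA dB \<psi>) * Psi dA dB \<psi> \<in> carrier_mat dB dB"
    using mult_carrier_mat[OF adj_carrier[OF Psi_carrier] Psi_carrier] by simp
  show ?thesis unfolding ptrace_A_Psi[OF psi] ptrace_B_Psi[OF psi] vN_entropy_transpose[OF c]
    by (rule vN_entropy_sylvester, auto)
qed

definition wsum :: "(complex vec \<Rightarrow> real) \<Rightarrow> (real \<times> complex vec) list \<Rightarrow> real" where
  "wsum g L = sum_list (map (\<lambda>x. fst x * g (snd x)) L)"

lemma sum_nth_list: "(\<Sum>k<length L. f (L ! k)) = sum_list (map f L)"
  by (simp add: sum_list_sum_nth atLeast0LessThan)

lemma pure_decomp_alt:
  "pure_decomp n \<rho> L \<longleftrightarrow> (\<forall>x\<in>set L. 0 \<le> fst x \<and> unit_vec_c n (snd x)) \<and> sum_list (map fst L) = 1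
     \<and> \<rho> = mat n n (\<lambda>(i,j). sum_list (map (\<lambda>x. complex_of_real (fst x) * proj (snd x) $$ (i,j)) L))"
proof -
  have "(\<forall>(p, \<psi>) \<in> set L. 0 \<le> p \<and> unit_vec_c n \<psi>) \<longleftrightarrow> (\<forall>x\<in>set L. 0 \<le> fst x \<and> unit_vec_c n (snd x))"
    by auto
  moreover have "(\<Sum>k<length L. fst (L ! k)) = sum_list (map fst L)" by (rule sum_nth_list)
  moreover have "(\<lambda>(i, j). \<Sum>k<length L. complex_of_real (fst (L ! k)) * proj (snd (L ! k)) $$ (i, j))
      = (\<lambda>(i,j). sum_list (map (\<lambda>x. complex_of_real (fst x) * proj (snd x) $$ (i,j)) L))"
    by (auto simp: sum_nth_list[where f = "\<lambda>x. complex_of_real (fst x) * proj (snd x) $$ _"])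
  ultimately show ?thesis unfolding pure_decomp_def by simp
qed

lemma coh_alt: "coh_assist n \<rho> = (SUP L\<in>{L. pure_decomp n \<rho> L}. wsum (\<lambda>\<psi>. vN_entropy (dephase (proj \<psi>))) L)"
  unfolding coh_assist_def wsum_def
  using sum_nth_list[where f = "\<lambda>x. fst x * vN_entropy (dephase (proj (snd x)))"] by simp

lemma IQ_alt: "IQ_coh_assist dA dB \<rho> = (SUP L\<in>{L. pure_decomp (dA*dB) \<rho> L}. wsum (\<lambda>\<psi>. vN_entropy (dephase_A dA dB (proj \<psi>))) L)"
  unfolding IQ_coh_assist_def wsum_def
  using sum_nth_list[where f = "\<lambda>x. fst x * vN_entropy (dephase_A dA dB (proj (snd x)))"] by simp

lemma ent_alt: "ent_assist dA dB \<rho> = (SUP L\<in>{L. pure_decomp (dA*dB) \<rho> L}. wsum (\<lambda>\<psi>. vN_entropy (ptrace_A dA dB (proj \<psi>))) L)"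
  unfolding ent_assist_def wsum_def
  using sum_nth_list[where f = "\<lambda>x. fst x * vN_entropy (ptrace_A dA dB (proj (snd x)))"] by simp

lemma wsum_le:
  assumes "pure_decomp n \<rho> L" "\<And>\<psi>. unit_vec_c n \<psi> \<Longrightarrow> g \<psi> \<le> B"
  shows "wsum g L \<le> B"
proof -
  have L: "\<forall>x\<in>set L. 0 \<le> fst x \<and> unit_vec_c n (snd x)" "sum_list (map fst L) = 1"
    using assms(1) unfolding pure_decomp_alt by auto
  have "wsum g L \<le> sum_list (map (\<lambda>x. fst x * B) L)"
    unfolding wsum_def by (rule sum_list_mono, use L assms(2) in \<open>auto intro: mult_left_mono\<close>)
  also have "\<dots> = sum_list (map fst L) * B" by (induction L, auto simp: algebra_simps)
  finally show ?thesis using L by simp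
qed

lemma wsum_mono:
  assumes "pure_decomp n \<rho> L" "\<And>\<psi>. unit_vec_c n \<psi> \<Longrightarrow> g \<psi> \<le> h \<psi>"
  shows "wsum g L \<le> wsum h L"
proof -
  have L: "\<forall>x\<in>set L. 0 \<le> fst x \<and> unit_vec_c n (snd x)"
    using assms(1) unfolding pure_decomp_alt by auto
  show ?thesis unfolding wsum_def by (rule sum_list_mono, use L assms(2) in \<open>auto intro: mult_left_mono\<close>)
qed

lemma wsum_add: "wsum (\<lambda>\<psi>. g \<psi> + h \<psi>) L = wsum g L + wsum h L"
  unfolding wsum_def by (induction L, auto simp: algebra_simps)

lemma sum_list_concat_map:
  "sum_list (map f (concat (map (\<lambda>x. map (h x) (F x)) L))) = sum_list (map (\<lambda>x. sum_list (map (\<lambda>y. f (h x y)) (F x))) L)"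
  by (induction L, auto simp: o_def)

lemma sum_list_const_mult': "sum_list (map (\<lambda>y. (c::'a::{comm_semiring_1}) * f y) xs) = c * sum_list (map f xs)"
  by (induction xs, auto simp: algebra_simps)

lemma sum_sum_list_swap:
  "(\<Sum>j\<in>J. sum_list (map (f j) L)) = sum_list (map (\<lambda>x. \<Sum>j\<in>J. f j x) L)"
  by (induction L, auto simp: sum.distrib)

definition mixl :: "(real \<times> complex vec) list \<Rightarrow> ((real \<times> complex vec) \<Rightarrow> (real \<times> complex vec) list) \<Rightarrow> (real \<times> complex vec) list" where
  "mixl L F = concat (map (\<lambda>x. map (\<lambda>y. (fst x * fst y, snd y)) (F x)) L)"

lemma wsum_mixl: "wsum g (mixl L F) = sum_list (map (\<lambda>x. fst x * wsum g (F x)) L)"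
  unfolding wsum_def mixl_def sum_list_concat_map
  by (simp add: sum_list_const_mult'[symmetric] mult.assoc)

lemma mix_decomp:
  assumes L: "\<forall>x\<in>set L. 0 \<le> fst x" "sum_list (map fst L) = 1"
    and F: "\<forall>x\<in>set L. pure_decomp m (S x) (F x)"
    and tau: "\<tau> = mat m m (\<lambda>(i,j). sum_list (map (\<lambda>x. complex_of_real (fst x) * S x $$ (i,j)) L))"
  shows "pure_decomp m \<tau> (mixl L F)"
proof -
  have Fx: "\<forall>y\<in>set (F x). 0 \<le> fst y \<and> unit_vec_c m (snd y)" "sum_list (map fst (F x)) = 1"
    "S x = mat m m (\<lambda>(i,j). sum_list (map (\<lambda>y. complex_of_real (fst y) * proj (snd y) $$ (i,j)) (F x)))"
    if "x \<in> set L" for x using F that unfolding pure_decomp_alt by auto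
  have "\<forall>z\<in>set (mixl L F). 0 \<le> fst z \<and> unit_vec_c m (snd z)"
    unfolding mixl_def using L(1) Fx(1) by fastforce
  moreover have "sum_list (map fst (mixl L F)) = 1"
  proof -
    have "sum_list (map fst (mixl L F)) = sum_list (map (\<lambda>x. fst x * sum_list (map fst (F x))) L)"
      unfolding mixl_def sum_list_concat_map by (simp add: sum_list_const_mult'[symmetric])
    also have "\<dots> = sum_list (map fst L)"
      by (rule arg_cong[where f = sum_list], rule map_cong, auto simp: Fx(2))
    finally show ?thesis using L(2) by simp
  qed
  moreover have "\<tau> = mat m m (\<lambda>(i,j). sum_list (map (\<lambda>z. complex_of_real (fst z) * proj (snd z) $$ (i,j)) (mixl L F)))"
  proof -
    have "sum_list (map (\<lambda>x. complex_of_real (fst x) * S x $$ (i,j)) L)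
        = sum_list (map (\<lambda>z. complex_of_real (fst z) * proj (snd z) $$ (i,j)) (mixl L F))" if ij: "i < m" "j < m" for i j
    proof -
      have "sum_list (map (\<lambda>z. complex_of_real (fst z) * proj (snd z) $$ (i,j)) (mixl L F))
         = sum_list (map (\<lambda>x. complex_of_real (fst x) * sum_list (map (\<lambda>y. complex_of_real (fst y) * proj (snd y) $$ (i,j)) (F x))) L)"
        unfolding mixl_def sum_list_concat_map by (simp add: sum_list_const_mult'[symmetric] mult.assoc)
      also have "\<dots> = sum_list (map (\<lambda>x. complex_of_real (fst x) * S x $$ (i,j)) L)"
        by (rule arg_cong[where f = sum_list], rule map_cong[OF refl], subst Fx(3), use ij in auto)
      finally show ?thesis by simp
    qed
    thus ?thesis unfolding tau by (auto intro!: eq_matI)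
  qed
  ultimately show ?thesis unfolding pure_decomp_alt by blast
qed

lemma ptrace_B_lin:
  assumes "pure_decomp (dA*dB) \<rho> L"
  shows "ptrace_B dA dB \<rho> = mat dA dA (\<lambda>(i,j). sum_list (map (\<lambda>x. complex_of_real (fst x) * ptrace_B dA dB (proj (snd x)) $$ (i,j)) L))"
proof -
  have rho: "\<rho> = mat (dA*dB) (dA*dB) (\<lambda>(i,j). sum_list (map (\<lambda>x. complex_of_real (fst x) * proj (snd x) $$ (i,j)) L))"
    using assms unfolding pure_decomp_alt by auto
  show ?thesis
    by (rule eq_matI, subst rho, auto simp: ptrace_B_def idx_bound sum_sum_list_swap sum_distrib_left intro!: arg_cong[where f = sum_list])
qed

lemma ptrace_A_lin:
  assumes "pure_decomp (dA*dB) \<rho> L"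
  shows "ptrace_A dA dB \<rho> = mat dB dB (\<lambda>(i,j). sum_list (map (\<lambda>x. complex_of_real (fst x) * ptrace_A dA dB (proj (snd x)) $$ (i,j)) L))"
proof -
  have rho: "\<rho> = mat (dA*dB) (dA*dB) (\<lambda>(i,j). sum_list (map (\<lambda>x. complex_of_real (fst x) * proj (snd x) $$ (i,j)) L))"
    using assms unfolding pure_decomp_alt by auto
  show ?thesis
    by (rule eq_matI, subst rho, auto simp: ptrace_A_def idx_bound sum_sum_list_swap sum_distrib_left intro!: arg_cong[where f = sum_list])
qed

lemma sum_list_upt_sum: "sum_list (map f [0..<n]) = (\<Sum>m<n. f m)"
  by (induction n, auto)

lemma udu_index:
  assumes U: "U \<in> carrier_mat n n" and D: "D \<in> carrier_mat n n" "diagonal_mat D"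
    and ij: "i < n" "j < n"
  shows "(U * D * adj U) $$ (i,j) = (\<Sum>m<n. U $$ (i,m) * D $$ (m,m) * cnj (U $$ (j,m)))"
proof -
  have ud: "(U * D) $$ (i,l) = U $$ (i,l) * D $$ (l,l)" if l: "l < n" for l
  proof -
    have "(U * D) $$ (i,l) = (\<Sum>m<n. U $$ (i,m) * D $$ (m,l))"
      using U D ij l by (simp add: scalar_prod_def atLeast0LessThan)
    also have "\<dots> = (\<Sum>m<n. if m = l then U $$ (i,l) * D $$ (l,l) else 0)"
      by (rule sum.cong, use D l in \<open>auto simp: diagonal_mat_def\<close>)
    also have "\<dots> = U $$ (i,l) * D $$ (l,l)" using l by simp
    finally show ?thesis .
  qed
  have "(U * D * adj U) $$ (i,j) = (\<Sum>l<n. (U * D) $$ (i,l) * cnj (U $$ (j,l)))"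
    using U D ij by (simp add: scalar_prod_def atLeast0LessThan)
  also have "\<dots> = (\<Sum>m<n. U $$ (i,m) * D $$ (m,m) * cnj (U $$ (j,m)))"
    by (rule sum.cong, auto simp: ud)
  finally show ?thesis .
qed

lemma unitary_col_norm:
  assumes "unitary n U" "m < n"
  shows "(\<Sum>i<n. (cmod (U $$ (i,m)))\<^sup>2) = 1"
proof -
  have Uc: "U \<in> carrier_mat n n" using assms by (simp add: unitary_def)
  have "(adj U * U) $$ (m,m) = 1" using assms by (simp add: unitary_def)
  moreover have "(adj U * U) $$ (m,m) = (\<Sum>i<n. cnj (U $$ (i,m)) * U $$ (i,m))"
    using Uc assms(2) by (simp add: scalar_prod_def atLeast0LessThan)
  ultimately have "(\<Sum>i<n. complex_of_real ((cmod (U $$ (i,m)))\<^sup>2)) = 1"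
    by (simp add: cnj_mult_self')
  thus ?thesis by (metis of_real_eq_1_iff of_real_sum)
qed

definition psd_form :: "nat \<Rightarrow> complex mat \<Rightarrow> bool" where
  "psd_form n \<sigma> \<longleftrightarrow> (\<forall>v \<in> carrier_vec n. 0 \<le> (\<Sum>i<n. \<Sum>j<n. cnj (v $ i) * \<sigma> $$ (i, j) * v $ j))"

lemma adj_mult_mult_index:
  assumes U: "U \<in> carrier_mat n n" and S: "S \<in> carrier_mat n n" and m: "m < n"
  shows "(adj U * S * U) $$ (m,m) = (\<Sum>i<n. \<Sum>j<n. cnj (col U m $ i) * S $$ (i, j) * col U m $ j)"
proof -
  have "(adj U * S * U) $$ (m,m) = (\<Sum>j<n. (adj U * S) $$ (m,j) * U $$ (j,m))"
    using U S m by (simp add: scalar_prod_def atLeast0LessThan)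
  also have "\<dots> = (\<Sum>j<n. (\<Sum>i<n. cnj (U $$ (i,m)) * S $$ (i,j)) * U $$ (j,m))"
    by (rule sum.cong, use U S m in \<open>auto simp: scalar_prod_def atLeast0LessThan\<close>)
  also have "\<dots> = (\<Sum>i<n. \<Sum>j<n. cnj (U $$ (i,m)) * S $$ (i, j) * U $$ (j,m))"
    unfolding sum_distrib_right by (rule sum.swap)
  also have "\<dots> = (\<Sum>i<n. \<Sum>j<n. cnj (col U m $ i) * S $$ (i, j) * col U m $ j)"
    using U m by (intro sum.cong, auto)
  finally show ?thesis .
qed

lemma spec_decomp:
  assumes S: "\<sigma> \<in> carrier_mat n n" "adj \<sigma> = \<sigma>" and tr: "(\<Sum>i<n. \<sigma> $$ (i,i)) = 1"
    and psd: "psd_form n \<sigma>"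
  shows "\<exists>U D. unitary n U \<and> D \<in> carrier_mat n n \<and> diagonal_mat D \<and> \<sigma> = U * D * adj U
     \<and> pure_decomp n \<sigma> (map (\<lambda>m. (Re (D $$ (m,m)), col U m)) [0..<n])
     \<and> vN_entropy \<sigma> = (\<Sum>m<n. eta (Re (D $$ (m,m))))
     \<and> (\<forall>m<n. Re (D $$ (m,m)) \<ge> 0)
     \<and> (\<forall>i<n. \<sigma> $$ (i,i) = complex_of_real (\<Sum>m<n. Re (D $$ (m,m)) * (cmod (U $$ (i,m)))\<^sup>2))"
proof -
  obtain U D where UD: "unitary n U" "D \<in> carrier_mat n n" "diagonal_mat D" "\<sigma> = U * D * adj U"
    using spectral[OF S] by blast
  have Uc: "U \<in> carrier_mat n n" "adj U \<in> carrier_mat n n" using UD by (auto simp: unitary_def)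
  have UU: "adj U * U = 1\<^sub>m n" "U * adj U = 1\<^sub>m n" using UD unitary_right[OF UD(1)] by (auto simp: unitary_def)
  have colc: "col U m \<in> carrier_vec n" for m using Uc(1) by (intro carrier_vecI) simp
  have Dsig: "D = adj U * \<sigma> * U"
  proof -
    have c1: "U * D \<in> carrier_mat n n" using Uc UD by (meson mult_carrier_mat)
    have c2: "U * D * adj U \<in> carrier_mat n n" using c1 Uc by (meson mult_carrier_mat)
    have "adj U * \<sigma> * U = adj U * (U * D * adj U * U)" unfolding UD(4)
      using assoc_mult_mat[OF Uc(2) c2 Uc(1)] by simp
    also have "U * D * adj U * U = U * D" using assoc_mult_mat[OF c1 Uc(2) Uc(1)] UU right_mult_one_mat[OF c1] by simp
    also have "adj U * (U * D) = D" using assoc_mult_mat[OF Uc(2) Uc(1) UD(2), symmetric] UU UD by simp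
    finally show ?thesis by simp
  qed
  have Dreal: "D $$ (m,m) = complex_of_real (Re (D $$ (m,m))) \<and> Re (D $$ (m,m)) \<ge> 0" if m: "m < n" for m
  proof -
    have e: "D $$ (m,m) = (\<Sum>i<n. \<Sum>j<n. cnj (col U m $ i) * \<sigma> $$ (i, j) * col U m $ j)"
      using Dsig adj_mult_mult_index[OF Uc(1) S(1) m] by simp
    have "col U m \<in> carrier_vec n" by (rule colc)
    hence "0 \<le> (\<Sum>i<n. \<Sum>j<n. cnj (col U m $ i) * \<sigma> $$ (i, j) * col U m $ j)"
      using psd unfolding psd_form_def by blast
    hence "0 \<le> D $$ (m,m)" by (subst e)
    hence "Im (D $$ (m,m)) = 0" "Re (D $$ (m,m)) \<ge> 0" unfolding less_eq_complex_def by auto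
    moreover hence "D $$ (m,m) = complex_of_real (Re (D $$ (m,m)))"
      by (metis complex_eq_iff Re_complex_of_real Im_complex_of_real)
    ultimately show ?thesis by blast
  qed
  have sent: "\<sigma> $$ (i,j) = (\<Sum>m<n. complex_of_real (Re (D $$ (m,m))) * (U $$ (i,m) * cnj (U $$ (j,m))))"
    if ij: "i < n" "j < n" for i j
  proof -
    have "\<sigma> $$ (i,j) = (\<Sum>m<n. D $$ (m,m) * (U $$ (i,m) * cnj (U $$ (j,m))))"
      unfolding UD(4) udu_index[OF Uc(1) UD(2,3) ij] by (simp add: mult_ac)
    also have "\<dots> = (\<Sum>m<n. complex_of_real (Re (D $$ (m,m))) * (U $$ (i,m) * cnj (U $$ (j,m))))"
    proof (rule sum.cong[OF refl])
      fix m assume "m \<in> {..<n}"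
      hence e: "D $$ (m,m) = complex_of_real (Re (D $$ (m,m)))" using Dreal by auto
      show "D $$ (m,m) * (U $$ (i,m) * cnj (U $$ (j,m))) = complex_of_real (Re (D $$ (m,m))) * (U $$ (i,m) * cnj (U $$ (j,m)))"
        by (subst e, rule refl)
    qed
    finally show ?thesis .
  qed
  have diag: "\<sigma> $$ (i,i) = complex_of_real (\<Sum>m<n. Re (D $$ (m,m)) * (cmod (U $$ (i,m)))\<^sup>2)" if i: "i < n" for i
    unfolding sent[OF i i] by (simp add: complex_norm_square[symmetric] del: complex_norm_square)
  have qsum: "(\<Sum>m<n. Re (D $$ (m,m))) = 1"
  proof -
    have "(\<Sum>i<n. \<Sum>m<n. Re (D $$ (m,m)) * (cmod (U $$ (i,m)))\<^sup>2) = (\<Sum>m<n. Re (D $$ (m,m)) * (\<Sum>i<n. (cmod (U $$ (i,m)))\<^sup>2))"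
      unfolding sum_distrib_left by (rule sum.swap)
    also have "\<dots> = (\<Sum>m<n. Re (D $$ (m,m)))" using unitary_col_norm[OF UD(1)] by simp
    finally have "(\<Sum>m<n. Re (D $$ (m,m))) = (\<Sum>i<n. \<Sum>m<n. Re (D $$ (m,m)) * (cmod (U $$ (i,m)))\<^sup>2)" by simp
    also have "complex_of_real \<dots> = (\<Sum>i<n. \<sigma> $$ (i,i))" by (simp add: diag)
    finally show ?thesis using tr by (metis of_real_eq_1_iff)
  qed
  have pd: "pure_decomp n \<sigma> (map (\<lambda>m. (Re (D $$ (m,m)), col U m)) [0..<n])"
    unfolding pure_decomp_alt
  proof (intro conjI)
    show "\<forall>x\<in>set (map (\<lambda>m. (Re (D $$ (m, m)), col U m)) [0..<n]). 0 \<le> fst x \<and> unit_vec_c n (snd x)"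
      using Dreal unitary_col_norm[OF UD(1)] colc Uc by (auto simp: unit_vec_c_def)
    show "sum_list (map fst (map (\<lambda>m. (Re (D $$ (m, m)), col U m)) [0..<n])) = 1"
      using qsum by (simp add: o_def sum_list_upt_sum)
    show "\<sigma> = mat n n (\<lambda>(i, j). \<Sum>x\<leftarrow>map (\<lambda>m. (Re (D $$ (m, m)), col U m)) [0..<n]. complex_of_real (fst x) * proj (snd x) $$ (i, j))"
      by (rule eq_matI, use S Uc in \<open>auto simp: o_def sum_list_upt_sum sent proj_index[OF colc]\<close>)
  qed
  have "vN_entropy \<sigma> = (\<Sum>m<n. eta (Re (D $$ (m,m))))"
    by (rule vN_entropy_diag_unitary[OF UD])
  thus ?thesis using UD pd Dreal diag by blast
qed

lemma gram_psd:
  assumes Y: "Y \<in> carrier_mat n k"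
  shows "psd_form n (Y * adj Y)"
  unfolding psd_form_def
proof
  fix v :: "complex vec" assume v: "v \<in> carrier_vec n"
  define w where "w j = (\<Sum>i<n. cnj (v $ i) * Y $$ (i,j))" for j
  define f where "f i j = cnj (v $ i) * Y $$ (i,j)" for i j
  define g where "g i' j = cnj (Y $$ (i',j)) * v $ i'" for i' j
  have "(\<Sum>i<n. \<Sum>i'<n. cnj (v $ i) * (Y * adj Y) $$ (i, i') * v $ i')
      = (\<Sum>i<n. \<Sum>i'<n. \<Sum>j<k. f i j * g i' j)"
  proof (intro sum.cong refl)
    fix i i' assume "i \<in> {..<n}" "i' \<in> {..<n}"
    hence "(Y * adj Y) $$ (i, i') = (\<Sum>j<k. Y $$ (i,j) * cnj (Y $$ (i',j)))"
      using Y by (simp add: scalar_prod_def atLeast0LessThan)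
    thus "cnj (v $ i) * (Y * adj Y) $$ (i, i') * v $ i' = (\<Sum>j<k. f i j * g i' j)"
      unfolding f_def g_def by (simp add: sum_distrib_left sum_distrib_right mult_ac)
  qed
  also have "\<dots> = (\<Sum>i<n. \<Sum>j<k. \<Sum>i'<n. f i j * g i' j)"
    by (rule sum.cong[OF refl], rule sum.swap)
  also have "\<dots> = (\<Sum>j<k. \<Sum>i<n. \<Sum>i'<n. f i j * g i' j)"
    by (rule sum.swap)
  also have "\<dots> = (\<Sum>j<k. w j * cnj (w j))"
  proof (rule sum.cong[OF refl])
    fix j
    have "cnj (w j) = (\<Sum>i'<n. g i' j)" unfolding w_def g_def by (simp add: mult.commute)
    thus "(\<Sum>i<n. \<Sum>i'<n. f i j * g i' j) = w j * cnj (w j)"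
      unfolding w_def f_def by (simp add: sum_product)
  qed
  also have "\<dots> = complex_of_real (\<Sum>j<k. (cmod (w j))\<^sup>2)"
    by (simp add: complex_norm_square[symmetric] del: complex_norm_square)
  finally show "0 \<le> (\<Sum>i<n. \<Sum>i'<n. cnj (v $ i) * (Y * adj Y) $$ (i, i') * v $ i')"
    by (simp add: less_eq_complex_def sum_nonneg)
qed

lemma ptrace_B_diag:
  assumes psi: "\<psi> \<in> carrier_vec (dA * dB)" and i: "i < dA"
  shows "ptrace_B dA dB (proj \<psi>) $$ (i,i) = complex_of_real (pA dB \<psi> i)"
proof -
  have "ptrace_B dA dB (proj \<psi>) $$ (i,i) = (\<Sum>j<dB. \<psi> $ (i*dB+j) * cnj (\<psi> $ (i*dB+j)))"
    using psi i by (auto simp: ptrace_B_def idx_bound intro!: sum.cong)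
  also have "\<dots> = complex_of_real (pA dB \<psi> i)"
    by (simp add: pA_def complex_norm_square[symmetric] del: complex_norm_square)
  finally show ?thesis .
qed

lemma pA_nonneg: "pA dB \<psi> i \<ge> 0" by (simp add: pA_def sum_nonneg)

lemma pA_sum:
  assumes "unit_vec_c (dA * dB) \<psi>"
  shows "(\<Sum>i<dA. pA dB \<psi> i) = 1"
proof -
  have "(\<Sum>i<dA. pA dB \<psi> i) = (\<Sum>k<dA*dB. (cmod (\<psi> $ k))\<^sup>2)"
    unfolding pA_def by (rule sum_prod_index[symmetric])
  thus ?thesis using assms by (simp add: unit_vec_c_def)
qed

lemma fam1:
  assumes psi: "unit_vec_c (dA * dB) \<psi>"
  shows "\<exists>G. pure_decomp dA (ptrace_B dA dB (proj \<psi>)) G \<and>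
    vN_entropy (dephase_A dA dB (proj \<psi>)) \<le> wsum (\<lambda>\<phi>. vN_entropy (dephase (proj \<phi>))) G + vN_entropy (ptrace_A dA dB (proj \<psi>))"
proof -
  have psic: "\<psi> \<in> carrier_vec (dA * dB)" using psi by (simp add: unit_vec_c_def)
  let ?Y = "Psi dA dB \<psi>"
  let ?s = "ptrace_B dA dB (proj \<psi>)"
  have s: "?s = ?Y * adj ?Y" by (rule ptrace_B_Psi[OF psic])
  have sc: "?s \<in> carrier_mat dA dA" unfolding s using mult_carrier_mat[OF Psi_carrier adj_carrier[OF Psi_carrier]] by simp
  have sh: "adj ?s = ?s" unfolding s using adj_mult[OF Psi_carrier adj_carrier[OF Psi_carrier]] by simp
  have tr: "(\<Sum>i<dA. ?s $$ (i,i)) = 1"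
    using pA_sum[OF psi] by (simp add: ptrace_B_diag[OF psic] flip: of_real_sum)
  have psd: "psd_form dA ?s" unfolding s by (rule gram_psd[OF Psi_carrier])
  obtain U D where UD: "unitary dA U" "D \<in> carrier_mat dA dA" "diagonal_mat D" "?s = U * D * adj U"
     "pure_decomp dA ?s (map (\<lambda>m. (Re (D $$ (m,m)), col U m)) [0..<dA])"
     "vN_entropy ?s = (\<Sum>m<dA. eta (Re (D $$ (m,m))))"
     "\<forall>m<dA. Re (D $$ (m,m)) \<ge> 0"
     "\<forall>i<dA. ?s $$ (i,i) = complex_of_real (\<Sum>m<dA. Re (D $$ (m,m)) * (cmod (U $$ (i,m)))\<^sup>2)"
    using spec_decomp[OF sc sh tr psd] by blast
  have Uc: "U \<in> carrier_mat dA dA" using UD(1) by (simp add: unitary_def)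
  have colc: "col U m \<in> carrier_vec dA" for m using Uc by (intro carrier_vecI) simp
  define G where "G = map (\<lambda>m. (Re (D $$ (m,m)), col U m)) [0..<dA]"
  have pAeq: "pA dB \<psi> i = (\<Sum>m<dA. Re (D $$ (m,m)) * (cmod (U $$ (i,m)))\<^sup>2)" if i: "i < dA" for i
    using of_real_eq_iff[THEN iffD1, OF trans[OF ptrace_B_diag[OF psic i, symmetric] UD(8)[rule_format, OF i]]] .
  have "vN_entropy (dephase_A dA dB (proj \<psi>)) = (\<Sum>i<dA. eta (pA dB \<psi> i))"
    by (rule entropy_dephase_A[OF psic])
  also have "\<dots> = (\<Sum>i<dA. eta (\<Sum>m<dA. Re (D $$ (m,m)) * (cmod (U $$ (i,m)))\<^sup>2))"
    by (rule sum.cong, auto simp: pAeq)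
  also have "\<dots> \<le> (\<Sum>m<dA. Re (D $$ (m,m)) * (\<Sum>i<dA. eta ((cmod (U $$ (i,m)))\<^sup>2))) + (\<Sum>m<dA. eta (Re (D $$ (m,m))))"
    by (rule shannon_ineq, use UD(7) unitary_col_norm[OF UD(1)] in auto)
  also have "(\<Sum>m<dA. Re (D $$ (m,m)) * (\<Sum>i<dA. eta ((cmod (U $$ (i,m)))\<^sup>2))) = wsum (\<lambda>\<phi>. vN_entropy (dephase (proj \<phi>))) G"
    unfolding wsum_def G_def map_map o_def sum_list_upt_sum
  proof (rule sum.cong[OF refl])
    fix m assume m: "m \<in> {..<dA}"
    have "vN_entropy (dephase (proj (col U m))) = (\<Sum>i<dA. eta ((cmod (col U m $ i))\<^sup>2))"
      by (rule entropy_dephase[OF colc])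
    also have "\<dots> = (\<Sum>i<dA. eta ((cmod (U $$ (i,m)))\<^sup>2))"
      by (rule sum.cong[OF refl], use Uc m in simp)
    finally show "Re (D $$ (m,m)) * (\<Sum>i<dA. eta ((cmod (U $$ (i,m)))\<^sup>2))
        = fst (Re (D $$ (m,m)), col U m) * vN_entropy (dephase (proj (snd (Re (D $$ (m,m)), col U m))))"
      by simp
  qed
  also have "(\<Sum>m<dA. eta (Re (D $$ (m,m)))) = vN_entropy (ptrace_A dA dB (proj \<psi>))"
    using UD(6) entropy_ptrace_AB[OF psic] by simp
  finally show ?thesis using UD(5) unfolding G_def by blast
qed

lemma fam2:
  assumes psi: "unit_vec_c (dA * dB) \<psi>" and dB: "0 < dB"
  shows "\<exists>F. pure_decomp dB (ptrace_A dA dB (proj \<psi>)) F \<and>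
    vN_entropy (dephase (proj \<psi>)) = vN_entropy (dephase_A dA dB (proj \<psi>)) + wsum (\<lambda>\<phi>. vN_entropy (dephase (proj \<phi>))) F"
proof -
  have psic: "\<psi> \<in> carrier_vec (dA * dB)" using psi by (simp add: unit_vec_c_def)
  define p where "p i = pA dB \<psi> i" for i
  define b where "b i j = (cmod (\<psi> $ (i*dB+j)))\<^sup>2" for i j
  define phi where "phi i = (if p i > 0 then vec dB (\<lambda>j. \<psi> $ (i*dB+j) / complex_of_real (sqrt (p i))) else unit_vec dB 0)" for i
  define F where "F = map (\<lambda>i. (p i, phi i)) [0..<dA]"
  have pnn: "p i \<ge> 0" for i by (simp add: p_def pA_nonneg)
  have pb: "p i = (\<Sum>j<dB. b i j)" for i by (simp add: p_def pA_def b_def)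
  have phic: "phi i \<in> carrier_vec dB" for i by (simp add: phi_def)
  have phisq: "(cmod (phi i $ j))\<^sup>2 = b i j / p i" if "p i > 0" "j < dB" for i j
    using that by (simp add: phi_def b_def norm_divide power_divide)
  have p0: "\<psi> $ (i*dB+j) = 0" if "p i = 0" "j < dB" for i j
  proof -
    have "\<forall>j\<in>{..<dB}. b i j = 0" using that pb[of i] by (simp add: sum_nonneg_eq_0_iff b_def)
    thus ?thesis using that by (simp add: b_def)
  qed
  have unit: "unit_vec_c dB (phi i)" for i
  proof (cases "p i > 0")
    case True
    have "(\<Sum>j<dB. (cmod (phi i $ j))\<^sup>2) = (\<Sum>j<dB. b i j / p i)" by (rule sum.cong, auto simp: phisq True)
    also have "\<dots> = 1" using True pb[of i] by (simp add: sum_divide_distrib[symmetric])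
    finally show ?thesis by (simp add: unit_vec_c_def phic)
  next
    case False
    have "(\<Sum>j<dB. (cmod (phi i $ j))\<^sup>2) = (\<Sum>j<dB. if j = 0 then 1 else 0)"
      by (rule sum.cong, use False in \<open>auto simp: phi_def\<close>)
    also have "\<dots> = 1" using dB by simp
    finally show ?thesis by (simp add: unit_vec_c_def phic)
  qed
  have pd: "pure_decomp dB (ptrace_A dA dB (proj \<psi>)) F"
    unfolding pure_decomp_alt
  proof (intro conjI)
    show "\<forall>x\<in>set F. 0 \<le> fst x \<and> unit_vec_c dB (snd x)" using pnn unit by (auto simp: F_def)
    show "sum_list (map fst F) = 1" using pA_sum[OF psi] by (simp add: F_def o_def sum_list_upt_sum p_def)
    show "ptrace_A dA dB (proj \<psi>) = mat dB dB (\<lambda>(i, j). \<Sum>x\<leftarrow>F. complex_of_real (fst x) * proj (snd x) $$ (i, j))"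
    proof (rule eq_matI)
      fix j j' assume "j < dim_row (mat dB dB (\<lambda>(i, j). \<Sum>x\<leftarrow>F. complex_of_real (fst x) * proj (snd x) $$ (i, j)))"
        "j' < dim_col (mat dB dB (\<lambda>(i, j). \<Sum>x\<leftarrow>F. complex_of_real (fst x) * proj (snd x) $$ (i, j)))"
      hence jj: "j < dB" "j' < dB" by auto
      have "ptrace_A dA dB (proj \<psi>) $$ (j,j') = (\<Sum>i<dA. \<psi> $ (i*dB+j) * cnj (\<psi> $ (i*dB+j')))"
        using psic jj by (auto simp: ptrace_A_def idx_bound intro!: sum.cong)
      also have "\<dots> = (\<Sum>i<dA. complex_of_real (p i) * proj (phi i) $$ (j,j'))"
      proof (rule sum.cong[OF refl])
        fix i
        show "\<psi> $ (i*dB+j) * cnj (\<psi> $ (i*dB+j')) = complex_of_real (p i) * proj (phi i) $$ (j,j')"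
        proof (cases "p i > 0")
          case True
          have s: "complex_of_real (sqrt (p i)) * complex_of_real (sqrt (p i)) = complex_of_real (p i)"
            using True by (simp flip: of_real_mult)
          have sn: "complex_of_real (sqrt (p i)) \<noteq> 0" using True by simp
          show ?thesis using True jj phic[of i] s sn
            by (simp add: phi_def field_simps)
        next
          case False
          hence "p i = 0" using pnn[of i] by simp
          thus ?thesis using p0 jj phic[of i] by simp
        qed
      qed
      also have "\<dots> = (\<Sum>x\<leftarrow>F. complex_of_real (fst x) * proj (snd x) $$ (j, j'))"
        by (simp add: F_def o_def sum_list_upt_sum)
      finally show "ptrace_A dA dB (proj \<psi>) $$ (j,j') = mat dB dB (\<lambda>(i, j). \<Sum>x\<leftarrow>F. complex_of_real (fst x) * proj (snd x) $$ (i, j)) $$ (j,j')"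
        using jj by simp
    qed (auto simp: ptrace_A_def)
  qed
  have "vN_entropy (dephase (proj \<psi>)) = (\<Sum>k<dA*dB. eta ((cmod (\<psi> $ k))\<^sup>2))"
    by (rule entropy_dephase[OF psic])
  also have "\<dots> = (\<Sum>i<dA. \<Sum>j<dB. eta (b i j))" unfolding b_def by (rule sum_prod_index)
  also have "\<dots> = (\<Sum>i<dA. eta (p i) + p i * (\<Sum>j<dB. eta ((cmod (phi i $ j))\<^sup>2)))"
    by (rule sum.cong[OF refl], rule cond_entropy_eq, auto simp: b_def pb phisq)
  also have "\<dots> = (\<Sum>i<dA. eta (p i)) + (\<Sum>i<dA. p i * vN_entropy (dephase (proj (phi i))))"
    by (simp add: sum.distrib entropy_dephase[OF phic])
  also have "(\<Sum>i<dA. eta (p i)) = vN_entropy (dephase_A dA dB (proj \<psi>))"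
    using entropy_dephase_A[OF psic] by (simp add: p_def)
  also have "(\<Sum>i<dA. p i * vN_entropy (dephase (proj (phi i)))) = wsum (\<lambda>\<phi>. vN_entropy (dephase (proj \<phi>))) F"
    by (simp add: wsum_def F_def o_def sum_list_upt_sum)
  finally show ?thesis using pd by blast
qed

lemma vN_bound:
  assumes "M \<in> carrier_mat n n"
  shows "vN_entropy M \<le> real n * (1 / ln 2)"
proof -
  obtain as where as: "char_poly M = (\<Prod>a\<leftarrow>as. [:- a, 1:])" "length as = n"
    using char_poly_factorized[OF assms] by blast
  have "vN_entropy M = sum_list (map (\<lambda>a. eta (Re a)) as)" by (rule vN_entropy_factorized[OF as(1)])
  also have "\<dots> \<le> sum_list (map (\<lambda>a. 1 / ln 2) as)" by (rule sum_list_mono, rule eta_le)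
  also have "\<dots> = real n * (1 / ln 2)" using as(2) by (simp add: sum_list_triv)
  finally show ?thesis .
qed

lemma wsum_cong_set:
  assumes "\<forall>x\<in>set L. g (snd x) = h (snd x)"
  shows "wsum g L = wsum h L"
  unfolding wsum_def by (rule arg_cong[where f = sum_list], rule map_cong, use assms in auto)

lemma wsum_mono_set:
  assumes "\<forall>x\<in>set L. 0 \<le> fst x \<and> g (snd x) \<le> h (snd x)"
  shows "wsum g L \<le> wsum h L"
  unfolding wsum_def by (rule sum_list_mono, use assms in \<open>auto intro: mult_left_mono\<close>)

lemma bdd_wsum:
  assumes "\<And>\<psi>. unit_vec_c n \<psi> \<Longrightarrow> g \<psi> \<le> B"
  shows "bdd_above ((wsum g) ` {L. pure_decomp n \<rho> L})"
  using wsum_le[OF _ assms] by (auto intro!: bdd_aboveI[where M = B])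

lemma unit_carrier: "unit_vec_c n \<psi> \<Longrightarrow> \<psi> \<in> carrier_vec n" by (simp add: unit_vec_c_def)

lemma bound_AB: "unit_vec_c n \<psi> \<Longrightarrow> vN_entropy (dephase (proj \<psi>)) \<le> real n * (1 / ln 2)"
  by (rule vN_bound, drule unit_carrier, simp add: dephase_def proj_def)

lemma bound_IQ: "unit_vec_c (dA*dB) \<psi> \<Longrightarrow> vN_entropy (dephase_A dA dB (proj \<psi>)) \<le> real (dA*dB) * (1 / ln 2)"
  by (rule vN_bound, simp add: dephase_A_def)

lemma bound_E: "unit_vec_c (dA*dB) \<psi> \<Longrightarrow> vN_entropy (ptrace_A dA dB (proj \<psi>)) \<le> real dB * (1 / ln 2)"
  by (rule vN_bound, simp add: ptrace_A_def)

lemma density_nonempty: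
  assumes "density_op n \<rho>"
  shows "\<exists>L. pure_decomp n \<rho> L"
proof -
  have c: "\<rho> \<in> carrier_mat n n"
    and herm: "\<forall>i<n. \<forall>j<n. \<rho> $$ (j, i) = cnj (\<rho> $$ (i, j))"
    and psd0: "\<forall>v \<in> carrier_vec n. 0 \<le> (\<Sum>i<n. \<Sum>j<n. cnj (v $ i) * \<rho> $$ (i, j) * v $ j)"
    and tr: "(\<Sum>i<n. \<rho> $$ (i, i)) = 1"
    using assms unfolding density_op_def by blast+
  have h: "adj \<rho> = \<rho>"
  proof (rule eq_matI)
    fix i j assume "i < dim_row \<rho>" "j < dim_col \<rho>"
    hence ij: "i < n" "j < n" using c by auto
    have "\<rho> $$ (i, j) = cnj (\<rho> $$ (j, i))" using herm ij(1) ij(2) by blast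
    thus "adj \<rho> $$ (i, j) = \<rho> $$ (i, j)" using c ij by simp
  qed (use c in auto)
  have psd: "psd_form n \<rho>" unfolding psd_form_def by (rule psd0)
  show ?thesis using spec_decomp[OF c h tr psd] by blast
qed

theorem theorem2:
  fixes dA dB :: nat and \<rho> :: "complex mat"
  assumes "0 < dA" and "0 < dB"
    and "density_op (dA * dB) \<rho>"
  shows "IQ_coh_assist dA dB \<rho> \<le> coh_assist dA (ptrace_B dA dB \<rho>) + ent_assist dA dB \<rho>
     \<and> coh_assist (dA * dB) \<rho> \<le> IQ_coh_assist dA dB \<rho> + coh_assist dB (ptrace_A dA dB \<rho>)
     \<and> coh_assist (dA * dB) \<rho> \<le> coh_assist dA (ptrace_B dA dB \<rho>) + coh_assist dB (ptrace_A dA dB \<rho>)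
                                   + ent_assist dA dB \<rho>"
proof -
  let ?N = "dA * dB"
  let ?S = "{L. pure_decomp ?N \<rho> L}"
  define hAB where "hAB \<psi> = vN_entropy (dephase (proj \<psi>))" for \<psi>
  define hIQ where "hIQ \<psi> = vN_entropy (dephase_A dA dB (proj \<psi>))" for \<psi>
  define hE where "hE \<psi> = vN_entropy (ptrace_A dA dB (proj \<psi>))" for \<psi>
  have hABf: "hAB = (\<lambda>\<psi>. vN_entropy (dephase (proj \<psi>)))" by (rule ext, simp add: hAB_def)
  have ne: "?S \<noteq> {}" using density_nonempty[OF assms(3)] by auto
  have bAB: "bdd_above ((wsum hAB) ` {L. pure_decomp n \<sigma> L})" for n \<sigma>
    unfolding hAB_def by (rule bdd_wsum, rule bound_AB)
  have bIQ: "bdd_above ((wsum hIQ) ` ?S)"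
    unfolding hIQ_def by (rule bdd_wsum, rule bound_IQ)
  have bE: "bdd_above ((wsum hE) ` ?S)"
    unfolding hE_def by (rule bdd_wsum, rule bound_E)
  have coh: "coh_assist n \<sigma> = (SUP L\<in>{L. pure_decomp n \<sigma> L}. wsum hAB L)" for n \<sigma>
    unfolding coh_alt hAB_def ..
  have IQ: "IQ_coh_assist dA dB \<rho> = (SUP L\<in>?S. wsum hIQ L)" unfolding IQ_alt hIQ_def ..
  have EA: "ent_assist dA dB \<rho> = (SUP L\<in>?S. wsum hE L)" unfolding ent_alt hE_def ..
  have Lprops: "\<forall>x\<in>set L. 0 \<le> fst x" "sum_list (map fst L) = 1" "\<forall>x\<in>set L. unit_vec_c ?N (snd x)"
    if "L \<in> ?S" for L using that unfolding pure_decomp_alt by auto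
  define G where "G \<psi> = (SOME G. pure_decomp dA (ptrace_B dA dB (proj \<psi>)) G \<and> hIQ \<psi> \<le> wsum hAB G + hE \<psi>)" for \<psi>
  have G: "pure_decomp dA (ptrace_B dA dB (proj \<psi>)) (G \<psi>) \<and> hIQ \<psi> \<le> wsum hAB (G \<psi>) + hE \<psi>"
    if "unit_vec_c ?N \<psi>" for \<psi>
    unfolding G_def by (rule someI_ex, use fam1[OF that] in \<open>simp add: hIQ_def hABf hE_def\<close>)
  have ineq1: "wsum hIQ L \<le> coh_assist dA (ptrace_B dA dB \<rho>) + ent_assist dA dB \<rho>" if L: "L \<in> ?S" for L
  proof -
    have "wsum hIQ L \<le> wsum (\<lambda>\<psi>. wsum hAB (G \<psi>) + hE \<psi>) L"
      by (rule wsum_mono_set, use Lprops[OF L] G in auto)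
    also have "\<dots> = wsum hAB (mixl L (\<lambda>x. G (snd x))) + wsum hE L"
      unfolding wsum_add wsum_mixl by (simp add: wsum_def)
    also have "wsum hAB (mixl L (\<lambda>x. G (snd x))) \<le> coh_assist dA (ptrace_B dA dB \<rho>)"
    proof -
      have "pure_decomp dA (ptrace_B dA dB \<rho>) (mixl L (\<lambda>x. G (snd x)))"
      proof (rule mix_decomp[OF Lprops(1)[OF L] Lprops(2)[OF L], where S = "\<lambda>x. ptrace_B dA dB (proj (snd x))"])
        show "\<forall>x\<in>set L. pure_decomp dA (ptrace_B dA dB (proj (snd x))) (G (snd x))"
          using Lprops(3)[OF L] G by blast
        show "ptrace_B dA dB \<rho> = mat dA dA (\<lambda>(i, j). \<Sum>x\<leftarrow>L. complex_of_real (fst x) * ptrace_B dA dB (proj (snd x)) $$ (i, j))"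
          by (rule ptrace_B_lin, use L in simp)
      qed
      thus ?thesis unfolding coh by (intro cSUP_upper[OF _ bAB]) simp
    qed
    also have "wsum hE L \<le> ent_assist dA dB \<rho>" unfolding EA by (rule cSUP_upper[OF L bE])
    finally show ?thesis by simp
  qed
  have I1: "IQ_coh_assist dA dB \<rho> \<le> coh_assist dA (ptrace_B dA dB \<rho>) + ent_assist dA dB \<rho>"
    unfolding IQ by (rule cSUP_least[OF ne ineq1])
  define F where "F \<psi> = (SOME F. pure_decomp dB (ptrace_A dA dB (proj \<psi>)) F \<and> hAB \<psi> = hIQ \<psi> + wsum hAB F)" for \<psi>
  have F: "pure_decomp dB (ptrace_A dA dB (proj \<psi>)) (F \<psi>) \<and> hAB \<psi> = hIQ \<psi> + wsum hAB (F \<psi>)"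
    if "unit_vec_c ?N \<psi>" for \<psi>
    unfolding F_def by (rule someI_ex, use fam2[OF that assms(2)] in \<open>simp add: hIQ_def hABf\<close>)
  have ineq2: "wsum hAB L \<le> IQ_coh_assist dA dB \<rho> + coh_assist dB (ptrace_A dA dB \<rho>)" if L: "L \<in> ?S" for L
  proof -
    have "wsum hAB L = wsum (\<lambda>\<psi>. hIQ \<psi> + wsum hAB (F \<psi>)) L"
      by (rule wsum_cong_set, use Lprops[OF L] F in auto)
    also have "\<dots> = wsum hIQ L + wsum hAB (mixl L (\<lambda>x. F (snd x)))"
      unfolding wsum_add wsum_mixl by (simp add: wsum_def)
    also have "wsum hAB (mixl L (\<lambda>x. F (snd x))) \<le> coh_assist dB (ptrace_A dA dB \<rho>)"
    proof -
      have "pure_decomp dB (ptrace_A dA dB \<rho>) (mixl L (\<lambda>x. F (snd x)))"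
      proof (rule mix_decomp[OF Lprops(1)[OF L] Lprops(2)[OF L], where S = "\<lambda>x. ptrace_A dA dB (proj (snd x))"])
        show "\<forall>x\<in>set L. pure_decomp dB (ptrace_A dA dB (proj (snd x))) (F (snd x))"
          using Lprops(3)[OF L] F by blast
        show "ptrace_A dA dB \<rho> = mat dB dB (\<lambda>(i, j). \<Sum>x\<leftarrow>L. complex_of_real (fst x) * ptrace_A dA dB (proj (snd x)) $$ (i, j))"
          by (rule ptrace_A_lin, use L in simp)
      qed
      thus ?thesis unfolding coh by (intro cSUP_upper[OF _ bAB]) simp
    qed
    also have "wsum hIQ L \<le> IQ_coh_assist dA dB \<rho>" unfolding IQ by (rule cSUP_upper[OF L bIQ])
    finally show ?thesis by simp
  qed
  have I2: "coh_assist ?N \<rho> \<le> IQ_coh_assist dA dB \<rho> + coh_assist dB (ptrace_A dA dB \<rho>)"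
    unfolding coh[of ?N \<rho>] by (rule cSUP_least[OF ne ineq2])
  show ?thesis using I1 I2 by linarith
qed

end
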